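(* Let $A$ be a trace class positive self-adjoint operator on a complex Hilbert space $\mathcal H$, let $e\in\mathcal H$ and $N\ge1$, and assume $Ae,A^2e,\dots,A^Ne$ are linearly independent. Then $$\mathrm{Tr}(A)\ge\frac{\det\Big(\big((A^{k+\ell}e|e)\big)_{0\le k\le N-1,\,0\le\ell\le N-2}\ \Big|\ \big((A^{k+N}e|e)\big)_{0\le k\le N-1}\Big)}{\det\big((A^{k+\ell}e|e)\big)_{0\le k,\ell\le N-1}},$$ where the numerator is the determinant of the $N\times N$ matrix whose first $N-1$ columns are indexed by $\ell=0,\dots,N-2$ with entries $(A^{k+\ell}e|e)$ and whose last column has entries $(A^{k+N}e|e)$ ($k$ the row index). Equality holds if and only if the range of $A$ has dimension $N$ and $e$ belongs to the range of $A$. *)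

theory Defs
  imports "HOL-Analysis.Infinite_Sum" "HOL-Library.Complex_Order" "Jordan_Normal_Form.Determinant"
begin

class complex_vector = real_vector +
  fixes scaleC :: "complex \<Rightarrow> 'a \<Rightarrow> 'a"  (infixr \<open>*\<^sub>C\<close> 75)
  assumes scaleC_add_right: "c *\<^sub>C (x + y) = c *\<^sub>C x + c *\<^sub>C y"
    and scaleC_add_left: "(c + d) *\<^sub>C x = c *\<^sub>C x + d *\<^sub>C x"
    and scaleC_scaleC: "c *\<^sub>C (d *\<^sub>C x) = (c * d) *\<^sub>C x"
    and scaleC_one: "1 *\<^sub>C x = x"
    and scaleR_scaleC: "scaleR r x = complex_of_real r *\<^sub>C x"

class complex_inner = complex_vector + real_normed_vector +
  fixes cinner :: "'a \<Rightarrow> 'a \<Rightarrow> complex"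
  assumes cinner_add_left: "cinner (x + y) z = cinner x z + cinner y z"
    and cinner_scaleC_left: "cinner (c *\<^sub>C x) y = c * cinner x y"
    and cinner_conj_sym: "cinner x y = cnj (cinner y x)"
    and cinner_self_nonneg: "Im (cinner x x) = 0 \<and> Re (cinner x x) \<ge> 0"
    and cinner_self_eq_zero: "cinner x x = 0 \<longleftrightarrow> x = 0"
    and norm_eq_sqrt_cinner: "norm x = sqrt (Re (cinner x x))"

class chilbert_space = complex_inner + complete_space

definition clinear :: "('a::complex_vector \<Rightarrow> 'b::complex_vector) \<Rightarrow> bool" where
  "clinear f \<longleftrightarrow> (\<forall>x y. f (x + y) = f x + f y) \<and> (\<forall>c x. f (c *\<^sub>C x) = c *\<^sub>C f x)"

definition bounded_clinear :: "('a::complex_inner \<Rightarrow> 'b::complex_inner) \<Rightarrow> bool" where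
  "bounded_clinear f \<longleftrightarrow> clinear f \<and> (\<exists>K. \<forall>x. norm (f x) \<le> norm x * K)"

definition selfadjoint_op :: "('a::complex_inner \<Rightarrow> 'a) \<Rightarrow> bool" where
  "selfadjoint_op A \<longleftrightarrow> (\<forall>x y. cinner (A x) y = cinner x (A y))"

definition positive_op :: "('a::complex_inner \<Rightarrow> 'a) \<Rightarrow> bool" where
  "positive_op A \<longleftrightarrow> (\<forall>x. Im (cinner (A x) x) = 0 \<and> Re (cinner (A x) x) \<ge> 0)"

definition is_onb :: "'a::complex_inner set \<Rightarrow> bool" where
  "is_onb B \<longleftrightarrow> (\<forall>b\<in>B. cinner b b = 1) \<and> (\<forall>b\<in>B. \<forall>b'\<in>B. b \<noteq> b' \<longrightarrow> cinner b b' = 0)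
     \<and> (\<forall>x. (\<forall>b\<in>B. cinner x b = 0) \<longrightarrow> x = 0)"

definition hilbert_schmidt :: "('a::chilbert_space \<Rightarrow> 'a) \<Rightarrow> bool" where
  "hilbert_schmidt A \<longleftrightarrow> bounded_clinear A \<and>
     (\<exists>B. is_onb B \<and> (\<lambda>b. (norm (A b))\<^sup>2) summable_on B)"

definition trace_class :: "('a::chilbert_space \<Rightarrow> 'a) \<Rightarrow> bool" where
  "trace_class A \<longleftrightarrow> (\<exists>S T. hilbert_schmidt S \<and> hilbert_schmidt T \<and> A = S \<circ> T)"

text \<open>Trace: sum of the diagonal entries with respect to an orthonormal basis
  (independent of the basis for trace class operators).\<close>
definition trace_op :: "('a::chilbert_space \<Rightarrow> 'a) \<Rightarrow> complex" where
  "trace_op A = infsum (\<lambda>b. cinner (A b) b) (SOME B. is_onb B)"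

definition clin_indep_family :: "nat set \<Rightarrow> (nat \<Rightarrow> 'a::complex_vector) \<Rightarrow> bool" where
  "clin_indep_family I v \<longleftrightarrow>
     (\<forall>c :: nat \<Rightarrow> complex. (\<Sum>k\<in>I. c k *\<^sub>C v k) = 0 \<longrightarrow> (\<forall>k\<in>I. c k = 0))"

definition has_cdim :: "'a::complex_vector set \<Rightarrow> nat \<Rightarrow> bool" where
  "has_cdim V n \<longleftrightarrow> (\<exists>v :: nat \<Rightarrow> 'a. clin_indep_family {..<n} v \<and>
      V = {\<Sum>k<n. c k *\<^sub>C v k | c :: nat \<Rightarrow> complex. True})"

end

theory Submission
  imports Defs
begin


instance chilbert_space \<subseteq> banach ..

lemma scaleC_zero_left [simp]: "(0::complex) *\<^sub>C (x::'a::complex_vector) = 0"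
proof -
  have "(0::complex) *\<^sub>C x = (0 + 0) *\<^sub>C x" by simp
  also have "\<dots> = 0 *\<^sub>C x + 0 *\<^sub>C x" by (rule scaleC_add_left)
  finally show ?thesis by simp
qed

lemma scaleC_zero_right [simp]: "c *\<^sub>C (0::'a::complex_vector) = 0"
proof -
  have "c *\<^sub>C (0::'a) = c *\<^sub>C (0 + 0)" by simp
  also have "\<dots> = c *\<^sub>C 0 + c *\<^sub>C 0" by (rule scaleC_add_right)
  finally show ?thesis by simp
qed

lemma scaleC_minus_right: "c *\<^sub>C (- x) = - (c *\<^sub>C (x::'a::complex_vector))"
  by (metis add_eq_0_iff2 add.right_inverse scaleC_add_right scaleC_zero_right)

lemma scaleC_minus_left: "(- c) *\<^sub>C x = - (c *\<^sub>C (x::'a::complex_vector))"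
  by (metis add_eq_0_iff2 add.right_inverse scaleC_add_left scaleC_zero_left)

lemma scaleC_diff_right: "c *\<^sub>C (x - y) = c *\<^sub>C x - c *\<^sub>C (y::'a::complex_vector)"
  by (metis diff_conv_add_uminus scaleC_add_right scaleC_minus_right)

lemma scaleC_diff_left: "(c - d) *\<^sub>C x = c *\<^sub>C x - d *\<^sub>C (x::'a::complex_vector)"
  by (metis diff_conv_add_uminus scaleC_add_left scaleC_minus_left)

lemma scaleC_sum_right: "c *\<^sub>C (\<Sum>i\<in>I. f i) = (\<Sum>i\<in>I. c *\<^sub>C (f i::'a::complex_vector))"
  by (induction I rule: infinite_finite_induct) (auto simp: scaleC_add_right)

lemma scaleC_sum_left: "(\<Sum>i\<in>I. f i) *\<^sub>C x = (\<Sum>i\<in>I. f i *\<^sub>C (x::'a::complex_vector))"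
  by (induction I rule: infinite_finite_induct) (auto simp: scaleC_add_left)

lemma scaleC_one' [simp]: "1 *\<^sub>C (x::'a::complex_vector) = x"
  by (rule scaleC_one)

lemma scaleC_scaleC' [simp]: "c *\<^sub>C (d *\<^sub>C (x::'a::complex_vector)) = (c * d) *\<^sub>C x"
  by (rule scaleC_scaleC)

lemma cinner_zero_left [simp]: "cinner 0 (y::'a::complex_inner) = 0"
  by (metis add_cancel_right_right add_0 cinner_add_left)

lemma cinner_zero_right [simp]: "cinner (x::'a::complex_inner) 0 = 0"
  by (metis cinner_conj_sym cinner_zero_left complex_cnj_zero)

lemma cinner_minus_left: "cinner (- x) (y::'a::complex_inner) = - cinner x y"
  by (metis add_eq_0_iff2 add.right_inverse cinner_add_left cinner_zero_left)

lemma cinner_diff_left: "cinner (x - z) (y::'a::complex_inner) = cinner x y - cinner z y"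
  by (metis diff_conv_add_uminus cinner_add_left cinner_minus_left)

lemma cinner_add_right: "cinner x (y + z) = cinner x y + cinner x (z::'a::complex_inner)"
  by (metis cinner_add_left cinner_conj_sym complex_cnj_add)

lemma cinner_diff_right: "cinner x (y - z) = cinner x y - cinner x (z::'a::complex_inner)"
  by (metis cinner_diff_left cinner_conj_sym complex_cnj_diff)

lemma cinner_scaleC_right: "cinner x (c *\<^sub>C y) = cnj c * cinner x (y::'a::complex_inner)"
  by (metis cinner_scaleC_left cinner_conj_sym complex_cnj_mult)

lemma cinner_sum_left: "cinner (\<Sum>i\<in>I. f i) (y::'a::complex_inner) = (\<Sum>i\<in>I. cinner (f i) y)"
  by (induction I rule: infinite_finite_induct) (auto simp: cinner_add_left)

lemma cinner_sum_right: "cinner y (\<Sum>i\<in>I. f i) = (\<Sum>i\<in>I. cinner (y::'a::complex_inner) (f i))"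
  by (induction I rule: infinite_finite_induct) (auto simp: cinner_add_right)

lemma cinner_scaleR_left: "cinner (r *\<^sub>R x) (y::'a::complex_inner) = r *\<^sub>R cinner x y"
  by (simp add: scaleR_scaleC cinner_scaleC_left scaleR_conv_of_real)

lemmas cinner_simps = cinner_add_left cinner_add_right cinner_diff_left cinner_diff_right
  cinner_scaleC_left cinner_scaleC_right cinner_sum_left cinner_sum_right
  cinner_minus_left

lemma cinner_self: "cinner x x = complex_of_real ((norm (x::'a::complex_inner))\<^sup>2)"
proof -
  have "Im (cinner x x) = 0" "Re (cinner x x) \<ge> 0" using cinner_self_nonneg by auto
  then show ?thesis by (simp add: norm_eq_sqrt_cinner complex_eq_iff)
qed

lemma cinner_self_Re: "Re (cinner x x) = (norm (x::'a::complex_inner))\<^sup>2"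
  by (simp add: cinner_self)

lemma cinner_commute: "cinner y x = cnj (cinner x (y::'a::complex_inner))"
  by (rule cinner_conj_sym)

lemma norm_scaleC: "norm (c *\<^sub>C x) = cmod c * norm (x::'a::complex_inner)"
proof -
  have "(norm (c *\<^sub>C x))\<^sup>2 = (cmod c * norm x)\<^sup>2"
  proof -
    have "complex_of_real ((norm (c *\<^sub>C x))\<^sup>2) = cinner (c *\<^sub>C x) (c *\<^sub>C x)" by (simp add: cinner_self)
    also have "\<dots> = (c * cnj c) * cinner x x" by (simp add: cinner_simps)
    also have "\<dots> = complex_of_real ((cmod c * norm x)\<^sup>2)"
    proof -
      have "c * cnj c = complex_of_real ((cmod c)\<^sup>2)" by (rule complex_norm_square[symmetric])
      then show ?thesis by (simp add: cinner_self power_mult_distrib)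
    qed
    finally show ?thesis using of_real_eq_iff by blast
  qed
  then show ?thesis by (simp add: power2_eq_iff_nonneg)
qed

lemma expand_sq: "cinner (x - a *\<^sub>C y) (x - a *\<^sub>C y) =
  cinner x x - cnj a * cinner x y - a * cinner y x + a * cnj a * cinner y (y::'a::complex_inner)"
  by (simp add: cinner_simps algebra_simps)

lemma cauchy_schwarz: "cmod (cinner x y) \<le> norm x * norm (y::'a::complex_inner)"
proof (cases "y = 0")
  case True then show ?thesis by simp
next
  case False
  define s where "s = (norm y)\<^sup>2"
  have s: "s > 0" using False by (simp add: s_def)
  define c where "c = cinner x y"
  define a where "a = c / complex_of_real s"
  have yy: "cinner y y = complex_of_real s" by (simp add: s_def cinner_self)
  have yx: "cinner y x = cnj c" by (simp add: c_def cinner_commute[of x y])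
  have "0 \<le> Re (cinner (x - a *\<^sub>C y) (x - a *\<^sub>C y))" using cinner_self_nonneg by blast
  also have "cinner (x - a *\<^sub>C y) (x - a *\<^sub>C y) = complex_of_real ((norm x)\<^sup>2 - (cmod c)\<^sup>2 / s)"
  proof -
    have cc: "c * cnj c = complex_of_real ((cmod c)\<^sup>2)" by (rule complex_norm_square[symmetric])
    have "cinner (x - a *\<^sub>C y) (x - a *\<^sub>C y) = cinner x x - cnj a * c - a * cnj c + a * cnj a * complex_of_real s"
      by (simp add: expand_sq yy yx c_def)
    also have "\<dots> = cinner x x - (c * cnj c) / complex_of_real s"
      using s by (simp add: a_def field_simps)
    also have "\<dots> = complex_of_real ((norm x)\<^sup>2 - (cmod c)\<^sup>2 / s)"
      by (simp add: cc cinner_self)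
    finally show ?thesis .
  qed
  finally have "(cmod c)\<^sup>2 / s \<le> (norm x)\<^sup>2" by simp
  then have "(cmod c)\<^sup>2 \<le> (norm x)\<^sup>2 * s" using s by (simp add: divide_le_eq)
  then have "(cmod c)\<^sup>2 \<le> (norm x * norm y)\<^sup>2" by (simp add: s_def power_mult_distrib)
  then show ?thesis unfolding c_def by (rule power2_le_imp_le[OF _ mult_nonneg_nonneg[OF norm_ge_zero norm_ge_zero]])
qed

lemma bounded_linear_cinner_left: "bounded_linear (\<lambda>x. cinner x (y::'a::complex_inner))"
proof (rule bounded_linear_intro[where K="norm y"])
  show "cinner (x + z) y = cinner x y + cinner z y" for x z by (rule cinner_add_left)
  show "cinner (r *\<^sub>R x) y = r *\<^sub>R cinner x y" for r x by (rule cinner_scaleR_left)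
  show "norm (cinner x y) \<le> norm x * norm y" for x by (rule cauchy_schwarz)
qed

lemma cinner_eq_zero_all: "(\<And>y. cinner x y = 0) \<Longrightarrow> x = (0::'a::complex_inner)"
  using cinner_self_eq_zero by blast

section \<open>Bounded linear operators\<close>

lemma bclin_add: "bounded_clinear T \<Longrightarrow> T (x + y) = T x + T y"
  by (simp add: bounded_clinear_def clinear_def)

lemma bclin_scaleC: "bounded_clinear T \<Longrightarrow> T (c *\<^sub>C x) = c *\<^sub>C T x"
  by (simp add: bounded_clinear_def clinear_def)

lemma bclin_zero: "bounded_clinear T \<Longrightarrow> T 0 = 0"
  by (metis bclin_scaleC scaleC_zero_left)

lemma bclin_minus: "bounded_clinear T \<Longrightarrow> T (- x) = - T x"
  by (metis bclin_scaleC scaleC_minus_left scaleC_one)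

lemma bclin_diff: assumes T: "bounded_clinear T" shows "T (x - y) = T x - T y"
proof -
  have "T (x - y) = T (x + (- y))" by simp
  also have "\<dots> = T x + T (- y)" by (rule bclin_add[OF T])
  also have "\<dots> = T x - T y" by (simp add: bclin_minus[OF T])
  finally show ?thesis .
qed

lemma bclin_sum: assumes T: "bounded_clinear T" shows "T (\<Sum>i\<in>I. f i) = (\<Sum>i\<in>I. T (f i))"
  by (induction I rule: infinite_finite_induct) (auto simp: bclin_add[OF T] bclin_zero[OF T])

lemma bclin_bounded_linear: "bounded_clinear T \<Longrightarrow> bounded_linear T"
  unfolding bounded_linear_def bounded_linear_axioms_def linear_def
  apply (intro conjI)
    apply (unfold_locales)
  by (auto simp: bclin_add bclin_scaleC scaleR_scaleC bounded_clinear_def)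


definition orthonormal :: "'a::complex_inner set \<Rightarrow> bool" where
  "orthonormal B \<longleftrightarrow> (\<forall>b\<in>B. cinner b b = 1) \<and> (\<forall>b\<in>B. \<forall>b'\<in>B. b \<noteq> b' \<longrightarrow> cinner b b' = 0)"

lemma onb_orthonormal: "is_onb B \<Longrightarrow> orthonormal B"
  by (simp add: is_onb_def orthonormal_def)

lemma onb_exists: "\<exists>B::'a::complex_inner set. is_onb B"
proof -
  let ?O = "{B::'a set. orthonormal B}"
  have "\<forall>C\<in>chains ?O. \<Union>C \<in> ?O"
  proof
    fix C assume C: "C \<in> chains ?O"
    show "\<Union>C \<in> ?O" unfolding mem_Collect_eq orthonormal_def
    proof (intro conjI ballI impI)
      fix b assume "b \<in> \<Union>C" then obtain X where "X \<in> C" "b \<in> X" by auto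
      then show "cinner b b = 1" using C by (auto simp: chains_def orthonormal_def)
    next
      fix b b' assume "b \<in> \<Union>C" "b' \<in> \<Union>C" "b \<noteq> b'"
      then obtain X Y where XY: "X \<in> C" "b \<in> X" "Y \<in> C" "b' \<in> Y" by auto
      from C XY have "X \<subseteq> Y \<or> Y \<subseteq> X" by (auto simp: chains_def chain_subset_def)
      then obtain Z where "Z \<in> C" "b \<in> Z" "b' \<in> Z" using XY by blast
      then show "cinner b b' = 0" using C \<open>b \<noteq> b'\<close> by (auto simp: chains_def orthonormal_def)
    qed
  qed
  then obtain M where M: "M \<in> ?O" "\<forall>X\<in>?O. M \<subseteq> X \<longrightarrow> X = M" using Zorn_Lemma[of ?O] by blast
  have "is_onb M" unfolding is_onb_def
  proof (intro conjI)
    show "\<forall>b\<in>M. cinner b b = 1" "\<forall>b\<in>M. \<forall>b'\<in>M. b \<noteq> b' \<longrightarrow> cinner b b' = 0"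
      using M(1) by (auto simp: orthonormal_def)
    show "\<forall>x. (\<forall>b\<in>M. cinner x b = 0) \<longrightarrow> x = 0"
    proof (intro allI impI, rule ccontr)
      fix x assume x: "\<forall>b\<in>M. cinner x b = 0" "x \<noteq> 0"
      define n where "n = norm x"
      have n: "n > 0" using x by (simp add: n_def)
      define u where "u = (1 / complex_of_real n) *\<^sub>C x"
      have "cinner u u = (1 / complex_of_real n) * cnj (1 / complex_of_real n) * cinner x x"
        by (simp add: u_def cinner_scaleC_left cinner_scaleC_right)
      also have "\<dots> = 1" using n by (simp add: cinner_self n_def[symmetric] power2_eq_square)
      finally have uu: "cinner u u = 1" .
      have ub: "cinner u b = 0" if "b \<in> M" for b using x that by (simp add: u_def cinner_simps)
      have bu: "cinner b u = 0" if "b \<in> M" for b using ub[OF that] by (metis cinner_commute complex_cnj_zero)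
      have "u \<notin> M" using ub uu by force
      have "insert u M \<in> ?O" using M(1) uu ub bu by (auto simp: orthonormal_def)
      then have "insert u M = M" using M(2) by blast
      then show False using \<open>u \<notin> M\<close> by blast
    qed
  qed
  then show ?thesis by blast
qed

lemma onb_some: "is_onb (SOME B::'a::complex_inner set. is_onb B)"
  by (rule someI_ex[OF onb_exists])

lemma orthonormal_sum_inner:
  assumes B: "orthonormal B" and F: "finite F" "F \<subseteq> B" and c: "c \<in> B"
  shows "cinner (\<Sum>b\<in>F. a b *\<^sub>C b) c = (if c \<in> F then a c else 0)"
proof -
  have "cinner (\<Sum>b\<in>F. a b *\<^sub>C b) c = (\<Sum>b\<in>F. a b * cinner b c)"
    by (simp add: cinner_simps)
  also have "\<dots> = (\<Sum>b\<in>F. if b = c then a b else 0)"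
  proof (rule sum.cong[OF refl])
    fix b assume "b \<in> F"
    then have "b \<in> B" using F by blast
    then show "a b * cinner b c = (if b = c then a b else 0)"
      using B c by (auto simp: orthonormal_def)
  qed
  also have "\<dots> = (if c \<in> F then a c else 0)" by (rule sum.delta[OF F(1)])
  finally show ?thesis .
qed

lemma orthonormal_sum_norm:
  assumes B: "orthonormal B" and F: "finite F" "F \<subseteq> B"
  shows "(norm (\<Sum>b\<in>F. a b *\<^sub>C b))\<^sup>2 = (\<Sum>b\<in>F. (cmod (a b))\<^sup>2)"
proof -
  have "cinner (\<Sum>b\<in>F. a b *\<^sub>C b) (\<Sum>b\<in>F. a b *\<^sub>C b) = (\<Sum>c\<in>F. cnj (a c) * cinner (\<Sum>b\<in>F. a b *\<^sub>C b) c)"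
    by (simp add: cinner_sum_right cinner_scaleC_right)
  also have "\<dots> = (\<Sum>c\<in>F. cnj (a c) * a c)"
  proof (rule sum.cong[OF refl])
    fix c assume "c \<in> F"
    then have "c \<in> B" using F by blast
    then show "cnj (a c) * cinner (\<Sum>b\<in>F. a b *\<^sub>C b) c = cnj (a c) * a c"
      using orthonormal_sum_inner[OF B F, of c a] \<open>c \<in> F\<close> by simp
  qed
  also have "\<dots> = (\<Sum>c\<in>F. complex_of_real ((cmod (a c))\<^sup>2))"
  proof (rule sum.cong[OF refl])
    fix c show "cnj (a c) * a c = complex_of_real ((cmod (a c))\<^sup>2)"
      using complex_norm_square[of "a c"] by (simp add: mult.commute)
  qed
  also have "\<dots> = complex_of_real (\<Sum>c\<in>F. (cmod (a c))\<^sup>2)"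
    by (rule of_real_sum[symmetric])
  finally have "complex_of_real ((norm (\<Sum>b\<in>F. a b *\<^sub>C b))\<^sup>2) = complex_of_real (\<Sum>c\<in>F. (cmod (a c))\<^sup>2)"
    unfolding cinner_self .
  then show ?thesis by (simp only: of_real_eq_iff)
qed

lemma cinner_mult_swap: "cinner x b * cinner b x = complex_of_real ((cmod (cinner x (b::'a::complex_inner)))\<^sup>2)"
  unfolding cinner_conj_sym[of b x] by (rule complex_norm_square[symmetric])

lemma bessel_finite:
  assumes B: "orthonormal B" and F: "finite F" "F \<subseteq> B"
  shows "(\<Sum>b\<in>F. (cmod (cinner x b))\<^sup>2) \<le> (norm x)\<^sup>2"
proof -
  define p where "p = (\<Sum>b\<in>F. cinner x b *\<^sub>C b)"
  define S where "S = (\<Sum>b\<in>F. (cmod (cinner x b))\<^sup>2)"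
  have px: "cinner p x = complex_of_real S"
  proof -
    have "cinner p x = (\<Sum>b\<in>F. cinner x b * cinner b x)" by (simp add: p_def cinner_simps)
    also have "\<dots> = (\<Sum>b\<in>F. complex_of_real ((cmod (cinner x b))\<^sup>2))"
      by (intro sum.cong refl) (rule cinner_mult_swap)
    finally show ?thesis by (simp add: S_def)
  qed
  have xp: "cinner x p = complex_of_real S" using px by (metis cinner_commute complex_cnj_complex_of_real)
  have pp: "cinner p p = complex_of_real S"
    using orthonormal_sum_norm[OF B F, of "\<lambda>b. cinner x b"] by (simp add: p_def S_def cinner_self)
  have "0 \<le> Re (cinner (x - p) (x - p))" using cinner_self_nonneg by blast
  also have "cinner (x - p) (x - p) = cinner x x - complex_of_real S"
    by (simp add: cinner_diff_left cinner_diff_right px xp pp)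
  also have "\<dots> = complex_of_real ((norm x)\<^sup>2 - S)"
    by (simp add: cinner_self)
  finally show ?thesis by (simp add: S_def)
qed

lemma bessel_summable:
  assumes B: "orthonormal B"
  shows "(\<lambda>b. (cmod (cinner x b))\<^sup>2) summable_on B"
proof (rule nonneg_bdd_above_summable_on)
  show "bdd_above (sum (\<lambda>b. (cmod (cinner x b))\<^sup>2) ` {F. F \<subseteq> B \<and> finite F})"
    using bessel_finite[OF B] by (auto intro!: bdd_aboveI[where M="(norm x)\<^sup>2"])
qed simp

lemma orthonormal_summable:
  fixes B :: "'a::chilbert_space set"
  assumes B: "orthonormal B" and g: "(\<lambda>b. (cmod (a b))\<^sup>2) summable_on B"
  shows "(\<lambda>b. a b *\<^sub>C b) summable_on B"
proof -
  define f where "f b = a b *\<^sub>C b" for b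
  define g where "g b = (cmod (a b))\<^sup>2" for b
  from g obtain L where lim: "(sum g \<longlongrightarrow> L) (finite_subsets_at_top B)"
    unfolding has_sum_def summable_on_def g_def by blast
  have "\<exists>P. eventually P (finite_subsets_at_top B) \<and>
              (\<forall>F F'. P F \<and> P F' \<longrightarrow> dist (sum f F) (sum f F') < e)" if "e>0" for e
  proof -
    define d P where "d = e\<^sup>2/16" and "P F \<longleftrightarrow> finite F \<and> F \<subseteq> B \<and> dist (sum g F) L < d" for F
    have "d > 0" using that by (simp add: d_def)
    have ev_P: "eventually P (finite_subsets_at_top B)"
      using lim
      by (auto simp add: P_def[abs_def] \<open>0 < d\<close> eventually_conj_iff eventually_finite_subsets_at_top_weakI tendsto_iff)
    moreover have "dist (sum f F1) (sum f F2) < e" if "P F1" and "P F2" for F1 F2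
    proof -
      from ev_P
      obtain F' where "finite F'" and "F' \<subseteq> B" and P_sup_F': "finite F \<and> F \<supseteq> F' \<and> F \<subseteq> B \<Longrightarrow> P F" for F
        by atomize_elim (simp add: eventually_finite_subsets_at_top)
      define F where "F = F' \<union> F1 \<union> F2"
      have "finite F" and "F \<subseteq> B"
        using F_def P_def[abs_def] that \<open>finite F'\<close> \<open>F' \<subseteq> B\<close> by auto
      have dist_F: "dist (sum g F) L < d"
        by (metis F_def \<open>F \<subseteq> B\<close> P_def P_sup_F' \<open>finite F\<close> le_supE order_refl)
      have dist_F_subset: "dist (sum f F) (sum f F') < e/2" if F': "F' \<subseteq> F" "P F'" for F'
      proof -
        have fin': "finite F'" using F' \<open>finite F\<close> finite_subset by blast
        have d1: "dist (sum f F) (sum f F') = norm (sum f (F-F'))"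
          unfolding dist_norm using \<open>finite F\<close> F' by (subst sum_diff) auto
        have "(norm (sum f (F-F')))\<^sup>2 = sum g (F - F')"
          unfolding f_def g_def using \<open>finite F\<close> \<open>F \<subseteq> B\<close> by (intro orthonormal_sum_norm[OF B]) auto
        moreover have "sum g (F - F') = sum g F - sum g F'"
          using \<open>finite F\<close> F' by (subst sum_diff) auto
        moreover have "sum g F - sum g F' < 2 * d"
          using dist_F F' unfolding P_def dist_real_def by linarith
        moreover have "2 * d < (e/2)\<^sup>2" using \<open>e > 0\<close> by (simp add: d_def power_divide)
        ultimately have "(dist (sum f F) (sum f F'))\<^sup>2 < (e/2)\<^sup>2"
          unfolding d1 by linarith
        then show ?thesis by (rule power_less_imp_less_base) (use \<open>e > 0\<close> in simp)
      qed
      have "dist (sum f F1) (sum f F2) \<le> dist (sum f F) (sum f F1) + dist (sum f F) (sum f F2)"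
        by (rule dist_triangle3)
      also have "\<dots> < e/2 + e/2"
        by (intro add_strict_mono dist_F_subset that) (auto simp: F_def)
      also have "\<dots> = e" by simp
      finally show "dist (sum f F1) (sum f F2) < e" .
    qed
    ultimately show ?thesis by blast
  qed
  then have "cauchy_filter (filtermap (sum f) (finite_subsets_at_top B))"
    by (simp add: cauchy_filter_metric_filtermap)
  then have "convergent_filter (filtermap (sum f) (finite_subsets_at_top B))"
    by (rule cauchy_filter_convergent)
  then obtain L' where "filtermap (sum f) (finite_subsets_at_top B) \<le> nhds L'"
    by (cases rule: convergent_filter.cases) blast
  then have "(sum f \<longlongrightarrow> L') (finite_subsets_at_top B)" by (simp add: filterlim_def)
  then have "(f has_sum L') B" unfolding has_sum_def .
  then have "f summable_on B" unfolding summable_on_def by blast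
  then show ?thesis unfolding f_def[abs_def] .
qed

lemma has_sum_single:
  assumes "c \<in> B" "\<And>b. b \<in> B \<Longrightarrow> b \<noteq> c \<Longrightarrow> f b = 0"
  shows "(f has_sum f c) B"
proof -
  have "(f has_sum f c) {c}" using has_sum_finite[of "{c}" f] by simp
  then show ?thesis by (rule has_sum_cong_neutral[THEN iffD1, rotated -1]) (use assms in auto)
qed

lemma onb_expansion:
  fixes x :: "'a::chilbert_space"
  assumes B: "is_onb B"
  shows "((\<lambda>b. cinner x b *\<^sub>C b) has_sum x) B"
proof -
  have ON: "orthonormal B" using B by (rule onb_orthonormal)
  have sm: "(\<lambda>b. cinner x b *\<^sub>C b) summable_on B"
    by (rule orthonormal_summable[OF ON bessel_summable[OF ON]])
  define z where "z = infsum (\<lambda>b. cinner x b *\<^sub>C b) B"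
  have hz: "((\<lambda>b. cinner x b *\<^sub>C b) has_sum z) B" using sm by (simp add: z_def)
  have "cinner z c = cinner x c" if c: "c \<in> B" for c
  proof -
    have "((\<lambda>b. cinner (cinner x b *\<^sub>C b) c) has_sum cinner z c) B"
      by (rule has_sum_bounded_linear[OF bounded_linear_cinner_left hz])
    moreover have "((\<lambda>b. cinner (cinner x b *\<^sub>C b) c) has_sum cinner x c) B"
    proof -
      have "((\<lambda>b. cinner (cinner x b *\<^sub>C b) c) has_sum cinner (cinner x c *\<^sub>C c) c) B"
        by (rule has_sum_single[OF c]) (use ON c in \<open>auto simp: orthonormal_def cinner_simps\<close>)
      then show ?thesis using ON c by (simp add: orthonormal_def cinner_simps)
    qed
    ultimately show ?thesis using has_sum_unique by blast
  qed
  then have "\<forall>b\<in>B. cinner (x - z) b = 0" by (simp add: cinner_diff_left)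
  then have "x - z = 0" using B unfolding is_onb_def by blast
  then show ?thesis using hz by simp
qed

lemma parseval:
  fixes x :: "'a::chilbert_space"
  assumes B: "is_onb B"
  shows "((\<lambda>b. cinner x b * cinner b y) has_sum cinner x y) B"
  using has_sum_bounded_linear[OF bounded_linear_cinner_left[of y] onb_expansion[OF B, of x]]
  by (simp add: cinner_simps)

lemma parseval_norm:
  fixes x :: "'a::chilbert_space"
  assumes B: "is_onb B"
  shows "((\<lambda>b. (cmod (cinner x b))\<^sup>2) has_sum (norm x)\<^sup>2) B"
proof -
  have "((\<lambda>b. Re (cinner x b * cinner b x)) has_sum Re (cinner x x)) B"
    by (rule has_sum_Re[OF parseval[OF B]])
  moreover have "Re (cinner x b * cinner b x) = (cmod (cinner x b))\<^sup>2" for b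
    by (simp only: cinner_mult_swap Re_complex_of_real)
  ultimately show ?thesis by (simp add: cinner_self_Re)
qed


lemma has_sum_diff:
  fixes f g :: "'i \<Rightarrow> 'b::topological_ab_group_add"
  assumes "(f has_sum a) A" "(g has_sum b) A"
  shows "((\<lambda>x. f x - g x) has_sum (a - b)) A"
proof -
  have "((\<lambda>x. - g x) has_sum - b) A" using assms(2) by (simp add: has_sum_uminus)
  from has_sum_add[OF assms(1) this] show ?thesis by simp
qed

lemma has_sum_sum:
  fixes f :: "'i \<Rightarrow> 'a \<Rightarrow> 'b::topological_comm_monoid_add"
  assumes "finite I" "\<And>i. i \<in> I \<Longrightarrow> (f i has_sum s i) A"
  shows "((\<lambda>x. \<Sum>i\<in>I. f i x) has_sum (\<Sum>i\<in>I. s i)) A"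
  using assms by (induction I rule: finite_induct) (auto intro!: has_sum_add)

lemma bclin_bound_nonneg:
  assumes T: "bounded_clinear T"
  obtains K where "K \<ge> 0" "\<And>x. norm (T x) \<le> norm x * K"
proof -
  obtain K0 where K0: "\<And>x. norm (T x) \<le> norm x * K0" using T by (auto simp: bounded_clinear_def)
  have "norm (T x) \<le> norm x * abs K0" for x
  proof -
    have "norm x * K0 \<le> norm x * abs K0" by (rule mult_left_mono) auto
    then show ?thesis using K0[of x] by linarith
  qed
  then show ?thesis using that[of "abs K0"] by simp
qed

lemma adjoint_exists:
  fixes T :: "'a::chilbert_space \<Rightarrow> 'a"
  assumes T: "bounded_clinear T"
  shows "\<exists>T'. \<forall>x y. cinner (T x) y = cinner x (T' y)"
proof -
  define B :: "'a set" where "B = (SOME B. is_onb B)"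
  have B: "is_onb B" unfolding B_def by (rule onb_some)
  have ON: "orthonormal B" by (rule onb_orthonormal[OF B])
  obtain K where K0: "K \<ge> 0" and K: "\<And>x. norm (T x) \<le> norm x * K" using bclin_bound_nonneg[OF T] by blast
  have bound: "(\<Sum>b\<in>F. (cmod (cinner y (T b)))\<^sup>2) \<le> (K * norm y)\<^sup>2" if F: "finite F" "F \<subseteq> B" for F y
  proof -
    define S where "S = (\<Sum>b\<in>F. (cmod (cinner y (T b)))\<^sup>2)"
    have S0: "S \<ge> 0" unfolding S_def by (intro sum_nonneg) simp
    define z where "z = (\<Sum>b\<in>F. cinner y (T b) *\<^sub>C b)"
    have zz: "(norm z)\<^sup>2 = S" unfolding z_def S_def by (rule orthonormal_sum_norm[OF ON F])
    have "cinner (T z) y = (\<Sum>b\<in>F. cinner y (T b) * cinner (T b) y)"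
      by (simp add: z_def bclin_sum[OF T] bclin_scaleC[OF T] cinner_sum_left cinner_scaleC_left)
    also have "\<dots> = (\<Sum>b\<in>F. complex_of_real ((cmod (cinner y (T b)))\<^sup>2))"
      by (intro sum.cong refl cinner_mult_swap)
    also have "\<dots> = complex_of_real S" unfolding S_def by (rule of_real_sum[symmetric])
    finally have Tz: "cinner (T z) y = complex_of_real S" .
    have "S = cmod (cinner (T z) y)" using Tz S0 by simp
    also have "\<dots> \<le> norm (T z) * norm y" by (rule cauchy_schwarz)
    also have "\<dots> \<le> norm z * K * norm y" by (rule mult_right_mono[OF K norm_ge_zero])
    finally have S1: "S \<le> norm z * (K * norm y)" by (simp add: mult.assoc)
    have nz: "norm z = sqrt S" using zz by (metis norm_ge_zero real_sqrt_unique)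
    show ?thesis
    proof (cases "S = 0")
      case True then show ?thesis by (simp add: S_def[symmetric])
    next
      case False
      then have "sqrt S > 0" using S0 by simp
      have "sqrt S * sqrt S \<le> sqrt S * (K * norm y)" using S1 nz S0 by simp
      then have "sqrt S \<le> K * norm y" by (rule mult_le_cancel_left_pos[OF \<open>sqrt S > 0\<close>, THEN iffD1])
      then have "(sqrt S)\<^sup>2 \<le> (K * norm y)\<^sup>2" by (rule power_mono) (use S0 in simp)
      then show ?thesis using S0 by (simp add: S_def[symmetric])
    qed
  qed
  define T' where "T' y = infsum (\<lambda>b. cinner y (T b) *\<^sub>C b) B" for y
  have hs: "((\<lambda>b. cinner y (T b) *\<^sub>C b) has_sum T' y) B" for y
  proof -
    have "(\<lambda>b. (cmod (cinner y (T b)))\<^sup>2) summable_on B"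
    proof (rule nonneg_bdd_above_summable_on)
      show "bdd_above (sum (\<lambda>b. (cmod (cinner y (T b)))\<^sup>2) ` {F. F \<subseteq> B \<and> finite F})"
        using bound by (auto intro!: bdd_aboveI[where M="(K * norm y)\<^sup>2"])
    qed simp
    then have "(\<lambda>b. cinner y (T b) *\<^sub>C b) summable_on B" by (rule orthonormal_summable[OF ON])
    then show ?thesis unfolding T'_def by (simp add: summable_iff_has_sum_infsum[symmetric])
  qed
  have "cinner (T x) y = cinner x (T' y)" for x y
  proof -
    have bl: "bounded_linear (\<lambda>v. cinner (T v) y)"
      by (rule bounded_linear_compose[OF bounded_linear_cinner_left bclin_bounded_linear[OF T]])
    have 1: "((\<lambda>b. cinner (T (cinner x b *\<^sub>C b)) y) has_sum cinner (T x) y) B"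
      by (rule has_sum_bounded_linear[OF bl onb_expansion[OF B]])
    have 2: "((\<lambda>b. cinner (cinner y (T b) *\<^sub>C b) x) has_sum cinner (T' y) x) B"
      by (rule has_sum_bounded_linear[OF bounded_linear_cinner_left hs])
    then have 3: "((\<lambda>b. cnj (cinner (cinner y (T b) *\<^sub>C b) x)) has_sum cnj (cinner (T' y) x)) B"
      by simp
    have eq: "cnj (cinner (cinner y (T b) *\<^sub>C b) x) = cinner (T (cinner x b *\<^sub>C b)) y" for b
      by (simp add: bclin_scaleC[OF T] cinner_scaleC_left cinner_commute[of b x] cinner_commute[of "T b" y] mult.commute)
    have "cinner (T x) y = cnj (cinner (T' y) x)"
      using 1 3 unfolding eq by (rule has_sum_unique)
    then show ?thesis by (simp add: cinner_commute[of x "T' y"])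
  qed
  then show ?thesis by blast
qed

lemma hs_transfer:
  fixes T T' :: "'a::chilbert_space \<Rightarrow> 'a"
  assumes adj: "\<And>x y. cinner (T x) y = cinner x (T' y)"
    and B: "is_onb B" and C: "is_onb C"
    and s: "(\<lambda>b. (norm (T b))\<^sup>2) summable_on B"
  shows "(\<lambda>c. (norm (T' c))\<^sup>2) summable_on C"
proof (rule nonneg_bdd_above_summable_on)
  show "bdd_above (sum (\<lambda>c. (norm (T' c))\<^sup>2) ` {F. F \<subseteq> C \<and> finite F})"
  proof (rule bdd_aboveI2)
    fix G assume "G \<in> {F. F \<subseteq> C \<and> finite F}"
    then have G: "G \<subseteq> C" "finite G" by auto
    define f where "f b c = (cmod (cinner (T b) c))\<^sup>2" for b c
    have h1: "((\<lambda>b. f b c) has_sum (norm (T' c))\<^sup>2) B" for c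
    proof -
      have "((\<lambda>b. (cmod (cinner (T' c) b))\<^sup>2) has_sum (norm (T' c))\<^sup>2) B" by (rule parseval_norm[OF B])
      moreover have "cmod (cinner (T' c) b) = cmod (cinner (T b) c)" for b
        by (simp add: cinner_conj_sym[of "T' c" b] adj)
      ultimately show ?thesis by (simp add: f_def)
    qed
    have hB: "((\<lambda>b. \<Sum>c\<in>G. f b c) has_sum (\<Sum>c\<in>G. (norm (T' c))\<^sup>2)) B"
      by (rule has_sum_sum[OF G(2) h1])
    have le: "(\<Sum>c\<in>G. f b c) \<le> (norm (T b))\<^sup>2" for b
    proof -
      have "((\<lambda>c. f b c) has_sum (norm (T b))\<^sup>2) C" unfolding f_def by (rule parseval_norm[OF C])
      then show ?thesis by (rule finite_sum_le_has_sum) (use G in \<open>auto simp: f_def\<close>)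
    qed
    have "(\<Sum>c\<in>G. (norm (T' c))\<^sup>2) \<le> infsum (\<lambda>b. (norm (T b))\<^sup>2) B"
      by (rule has_sum_mono[OF hB has_sum_infsum[OF s] le])
    then show "(\<Sum>c\<in>G. (norm (T' c))\<^sup>2) \<le> infsum (\<lambda>b. (norm (T b))\<^sup>2) B" .
  qed
qed simp

lemma adjoint_sym:
  assumes "\<And>x y. cinner (T x) y = cinner x (T' y)"
  shows "cinner (T' x) y = cinner x (T (y::'a::complex_inner))"
proof -
  have "cinner (T' x) y = cnj (cinner y (T' x))" by (rule cinner_conj_sym)
  also have "\<dots> = cnj (cinner (T y) x)" by (simp add: assms)
  also have "\<dots> = cinner x (T y)" by (rule cinner_conj_sym[symmetric])
  finally show ?thesis .
qed

lemma hs_any_onb: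
  fixes T :: "'a::chilbert_space \<Rightarrow> 'a"
  assumes T: "bounded_clinear T" and B: "is_onb B" and s: "(\<lambda>b. (norm (T b))\<^sup>2) summable_on B"
    and C: "is_onb C"
  shows "(\<lambda>c. (norm (T c))\<^sup>2) summable_on C"
proof -
  obtain T' where adj: "\<And>x y. cinner (T x) y = cinner x (T' y)" using adjoint_exists[OF T] by blast
  have "(\<lambda>c. (norm (T' c))\<^sup>2) summable_on C" by (rule hs_transfer[OF adj B C s])
  then show ?thesis by (rule hs_transfer[OF adjoint_sym[OF adj] C C])
qed

lemma trace_class_has_sum:
  fixes A :: "'a::chilbert_space \<Rightarrow> 'a"
  assumes tc: "trace_class A"
  shows "((\<lambda>b. cinner (A b) b) has_sum trace_op A) (SOME B. is_onb B)"
proof -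
  define C :: "'a set" where "C = (SOME B. is_onb B)"
  have C: "is_onb C" unfolding C_def by (rule onb_some)
  obtain S T where HS: "hilbert_schmidt S" "hilbert_schmidt T" and A: "A = S \<circ> T"
    using tc by (auto simp: trace_class_def)
  obtain B1 where S: "bounded_clinear S" "is_onb B1" "(\<lambda>b. (norm (S b))\<^sup>2) summable_on B1"
    using HS(1) by (auto simp: hilbert_schmidt_def)
  obtain B2 where T: "bounded_clinear T" "is_onb B2" "(\<lambda>b. (norm (T b))\<^sup>2) summable_on B2"
    using HS(2) by (auto simp: hilbert_schmidt_def)
  obtain S' where adj: "\<And>x y. cinner (S x) y = cinner x (S' y)" using adjoint_exists[OF S(1)] by blast
  have hT: "(\<lambda>c. (norm (T c))\<^sup>2) summable_on C" by (rule hs_any_onb[OF T C])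
  have hS: "(\<lambda>c. (norm (S' c))\<^sup>2) summable_on C" by (rule hs_transfer[OF adj S(2) C S(3)])
  have bnd: "norm (cinner (A c) c) \<le> (norm (T c))\<^sup>2 + (norm (S' c))\<^sup>2" for c
  proof -
    have "norm (cinner (A c) c) = cmod (cinner (T c) (S' c))" by (simp add: A adj)
    also have "\<dots> \<le> norm (T c) * norm (S' c)" by (rule cauchy_schwarz)
    also have "\<dots> \<le> (norm (T c))\<^sup>2 + (norm (S' c))\<^sup>2"
    proof -
      define p where "p = norm (T c)"
      define q where "q = norm (S' c)"
      have pq: "0 \<le> p * q" by (simp add: p_def q_def)
      have "0 \<le> (p - q) * (p - q)" by simp
      then have "0 \<le> p * p - 2 * (p * q) + q * q" by (simp add: algebra_simps)
      then have "p * q \<le> p\<^sup>2 + q\<^sup>2" using pq by (simp add: power2_eq_square)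
      then show ?thesis by (simp add: p_def q_def)
    qed
    finally show ?thesis .
  qed
  have "(\<lambda>c. norm (cinner (A c) c)) summable_on C"
    by (rule summable_on_comparison_test[OF summable_on_add[OF hT hS]]) (use bnd in auto)
  then have "(\<lambda>c. cinner (A c) c) summable_on C" by (rule abs_summable_summable)
  then show ?thesis unfolding C_def trace_op_def by (simp add: summable_iff_has_sum_infsum[symmetric])
qed

lemma positive_zero:
  fixes A :: "'a::complex_inner \<Rightarrow> 'a"
  assumes pos: "positive_op A" and sa: "selfadjoint_op A" and AL: "bounded_clinear A"
    and x: "cinner (A x) x = 0"
  shows "A x = 0"
proof -
  define y where "y = A x"
  define a where "a = (norm y)\<^sup>2"
  define c where "c = Re (cinner (A y) y)"
  have c0: "c \<ge> 0" using pos by (simp add: positive_op_def c_def)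
  have a0: "a \<ge> 0" by (simp add: a_def)
  have q: "0 \<le> 2 * t * a + t\<^sup>2 * c" for t :: real
  proof -
    have Ayx: "cinner (A y) x = cinner y y"
      using sa by (simp add: selfadjoint_op_def y_def)
    have "cinner (A (x + complex_of_real t *\<^sub>C y)) (x + complex_of_real t *\<^sub>C y)
       = cinner (A x) x + complex_of_real t * cinner (A x) y + complex_of_real t * cinner (A y) x
         + complex_of_real t * complex_of_real t * cinner (A y) y"
      by (simp add: bclin_add[OF AL] bclin_scaleC[OF AL] cinner_add_left cinner_add_right
          cinner_scaleC_left cinner_scaleC_right algebra_simps)
    also have "\<dots> = complex_of_real (2 * t * a) + complex_of_real (t\<^sup>2) * cinner (A y) y"
      using x Ayx by (simp add: y_def[symmetric] a_def cinner_self power2_eq_square)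
    finally have "Re (cinner (A (x + complex_of_real t *\<^sub>C y)) (x + complex_of_real t *\<^sub>C y)) = 2 * t * a + t\<^sup>2 * c"
      by (simp add: c_def)
    moreover have "0 \<le> Re (cinner (A (x + complex_of_real t *\<^sub>C y)) (x + complex_of_real t *\<^sub>C y))"
      using pos by (simp add: positive_op_def)
    ultimately show ?thesis by simp
  qed
  define t where "t = - a / (c + 1)"
  have c1: "c + 1 > 0" using c0 by simp
  have ct: "(c + 1) * t = - a" using c1 by (simp add: t_def)
  have "(c + 1)\<^sup>2 * (2 * t * a + t\<^sup>2 * c) = 2 * a * ((c + 1) * t) * (c + 1) + ((c + 1) * t)\<^sup>2 * c"
    by (simp add: algebra_simps power2_eq_square)
  also have "\<dots> = - (a\<^sup>2 * (c + 2))" unfolding ct by (simp add: algebra_simps power2_eq_square)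
  finally have eq: "(c + 1)\<^sup>2 * (2 * t * a + t\<^sup>2 * c) = - (a\<^sup>2 * (c + 2))" .
  have "0 \<le> (c + 1)\<^sup>2 * (2 * t * a + t\<^sup>2 * c)" using q[of t] by simp
  then have "a\<^sup>2 * (c + 2) \<le> 0" unfolding eq by simp
  then have "a\<^sup>2 \<le> 0" using c0 by (simp add: mult_le_0_iff)
  then have "a = 0" by simp
  then show ?thesis by (simp add: a_def y_def)
qed


global_interpretation cv: vector_space "scaleC :: complex \<Rightarrow> 'a::complex_vector \<Rightarrow> 'a"
  by unfold_locales (simp_all add: scaleC_add_right scaleC_add_left)

lemma indepD: "clin_indep_family I v \<Longrightarrow> (\<Sum>k\<in>I. c k *\<^sub>C v k) = 0 \<Longrightarrow> k \<in> I \<Longrightarrow> c k = 0"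
  by (simp add: clin_indep_family_def)

lemma indep_mono:
  assumes "clin_indep_family J v" "I \<subseteq> J" "finite J"
  shows "clin_indep_family I v"
  unfolding clin_indep_family_def
proof (intro allI impI ballI)
  fix c :: "nat \<Rightarrow> complex" and k
  assume s: "(\<Sum>k\<in>I. c k *\<^sub>C v k) = 0" and k: "k \<in> I"
  define c' where "c' k = (if k \<in> I then c k else 0)" for k
  have "(\<Sum>k\<in>J. c' k *\<^sub>C v k) = (\<Sum>k\<in>I. c k *\<^sub>C v k)"
  proof -
    have "(\<Sum>k\<in>J. c' k *\<^sub>C v k) = (\<Sum>k\<in>I. c' k *\<^sub>C v k)"
      using assms(2,3) by (intro sum.mono_neutral_right) (auto simp: c'_def)
    also have "\<dots> = (\<Sum>k\<in>I. c k *\<^sub>C v k)" by (simp add: c'_def)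
    finally show ?thesis .
  qed
  then have "(\<Sum>k\<in>J. c' k *\<^sub>C v k) = 0" using s by simp
  then have "c' k = 0" using k assms(2) by (intro indepD[OF assms(1)]) auto
  then show "c k = 0" using k by (simp add: c'_def)
qed

lemma indep_inj:
  assumes "clin_indep_family I v" "finite I"
  shows "inj_on v I"
proof (rule inj_onI, rule ccontr)
  fix i j assume ij: "i \<in> I" "j \<in> I" "v i = v j" "i \<noteq> j"
  define c where "c k = (if k = i then 1 else if k = j then -1 else (0::complex))" for k
  have "(\<Sum>k\<in>I. c k *\<^sub>C v k) = (\<Sum>k\<in>{i,j}. c k *\<^sub>C v k)"
    using ij assms(2) by (intro sum.mono_neutral_right) (auto simp: c_def)
  also have "\<dots> = 0" using ij by (simp add: c_def scaleC_minus_left)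
  finally have "c i = 0" using ij(1) by (rule indepD[OF assms(1)])
  then show False by (simp add: c_def)
qed

lemma indep_cv:
  assumes "clin_indep_family I v" "finite I"
  shows "cv.independent (v ` I)"
proof
  assume "cv.dependent (v ` I)"
  then obtain a where a: "\<exists>x\<in>v ` I. a x \<noteq> 0" "(\<Sum>x\<in>v ` I. a x *\<^sub>C x) = 0"
    using cv.dependent_finite[of "v ` I"] assms(2) by blast
  have inj: "inj_on v I" by (rule indep_inj[OF assms])
  have h: "(\<Sum>k\<in>I. a (v k) *\<^sub>C v k) = 0" using a(2) by (simp add: sum.reindex[OF inj])
  have "\<forall>k\<in>I. a (v k) = 0" using indepD[OF assms(1) h] by blast
  then show False using a(1) by blast
qed

lemma span_repr:
  assumes "finite I" "inj_on v I" "y \<in> cv.span (v ` I)"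
  shows "\<exists>c. y = (\<Sum>k\<in>I. c k *\<^sub>C v k)"
proof -
  obtain a where "y = (\<Sum>x\<in>v ` I. a x *\<^sub>C x)"
    using assms(3) cv.span_finite[of "v ` I"] assms(1) by auto
  then have "y = (\<Sum>k\<in>I. a (v k) *\<^sub>C v k)" by (simp add: sum.reindex[OF assms(2)])
  then show ?thesis by (rule exI[of _ "\<lambda>k. a (v k)"])
qed

lemma span_of_sum: "(\<Sum>k\<in>I. c k *\<^sub>C v k) \<in> cv.span (v ` I)"
  by (intro cv.span_sum cv.span_scale cv.span_base) auto

lemma span_subset_span: "A \<subseteq> cv.span B \<Longrightarrow> cv.span A \<subseteq> cv.span B"
  by (metis cv.span_mono cv.span_span)

lemma span_insert_eq:
  assumes "cv.span S = cv.span T" "a \<in> cv.span (insert b T)" "b \<in> cv.span (insert a S)"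
  shows "cv.span (insert a S) = cv.span (insert b T)"
proof
  have "S \<subseteq> cv.span (insert b T)"
    using assms(1) cv.span_superset[of S] cv.span_mono[of T "insert b T"] by blast
  then show "cv.span (insert a S) \<subseteq> cv.span (insert b T)" using assms(2) by (intro span_subset_span) auto
  have "T \<subseteq> cv.span (insert a S)"
    using assms(1) cv.span_superset[of T] cv.span_mono[of S "insert a S"] by blast
  then show "cv.span (insert b T) \<subseteq> cv.span (insert a S)" using assms(3) by (intro span_subset_span) auto
qed

definition ONfam :: "nat \<Rightarrow> (nat \<Rightarrow> 'a::complex_inner) \<Rightarrow> bool" where
  "ONfam n u \<longleftrightarrow> (\<forall>i<n. \<forall>j<n. cinner (u i) (u j) = (if i = j then 1 else 0))"

lemma ON_sum_delta:
  assumes "ONfam n u" "j < n"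
  shows "(\<Sum>i<n. a i * cinner (u i) (u j)) = a j"
proof -
  have "(\<Sum>i<n. a i * cinner (u i) (u j)) = (\<Sum>i<n. if i = j then a i else 0)"
    using assms by (intro sum.cong refl) (auto simp: ONfam_def)
  also have "\<dots> = a j" using assms(2) by simp
  finally show ?thesis .
qed

lemma gram_schmidt:
  fixes v :: "nat \<Rightarrow> 'a::complex_inner"
  assumes "clin_indep_family {..<n} v"
  shows "\<exists>u. ONfam n u \<and> cv.span (u ` {..<n}) = cv.span (v ` {..<n})"
  using assms
proof (induction n)
  case 0
  then show ?case by (auto simp: ONfam_def)
next
  case (Suc n)
  have indn: "clin_indep_family {..<n} v" by (rule indep_mono[OF Suc.prems]) auto
  obtain u where u: "ONfam n u" "cv.span (u ` {..<n}) = cv.span (v ` {..<n})"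
    using Suc.IH[OF indn] by blast
  have vn: "v n \<notin> cv.span (v ` {..<n})"
  proof
    assume "v n \<in> cv.span (v ` {..<n})"
    then obtain c where c: "v n = (\<Sum>k<n. c k *\<^sub>C v k)"
      using span_repr[OF _ indep_inj[OF indn]] by blast
    define c' where "c' k = (if k = n then -1 else c k)" for k
    have "(\<Sum>k<Suc n. c' k *\<^sub>C v k) = (\<Sum>k<n. c k *\<^sub>C v k) - v n"
      by (simp add: c'_def scaleC_minus_left)
    also have "\<dots> = 0" using c by simp
    finally have "c' n = 0" by (rule indepD[OF Suc.prems]) simp
    then show False by (simp add: c'_def)
  qed
  define s where "s = (\<Sum>i<n. cinner (v n) (u i) *\<^sub>C u i)"
  have s_span: "s \<in> cv.span (v ` {..<n})" unfolding s_def u(2)[symmetric] by (rule span_of_sum)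
  define w where "w = v n - s"
  have w0: "w \<noteq> 0"
  proof
    assume "w = 0" then have "v n = s" by (simp add: w_def)
    then show False using vn s_span by simp
  qed
  define nw where "nw = norm w"
  have nw: "nw > 0" using w0 by (simp add: nw_def)
  define un where "un = (1 / complex_of_real nw) *\<^sub>C w"
  define u' where "u' = u(n := un)"
  have wu: "cinner w (u j) = 0" if "j < n" for j
  proof -
    have "cinner s (u j) = (\<Sum>i<n. cinner (v n) (u i) * cinner (u i) (u j))"
      by (simp add: s_def cinner_sum_left cinner_scaleC_left)
    also have "\<dots> = cinner (v n) (u j)" by (rule ON_sum_delta[OF u(1) that])
    finally show ?thesis by (simp add: w_def cinner_diff_left)
  qed
  have unn: "cinner un un = 1"
  proof -
    have "cinner un un = (1 / complex_of_real nw) * cnj (1 / complex_of_real nw) * cinner w w"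
      by (simp add: un_def cinner_scaleC_left cinner_scaleC_right)
    also have "\<dots> = 1" using nw by (simp add: cinner_self nw_def[symmetric] power2_eq_square)
    finally show ?thesis .
  qed
  have unj: "cinner un (u j) = 0" if "j < n" for j
    using wu[OF that] by (simp add: un_def cinner_scaleC_left)
  have jun: "cinner (u j) un = 0" if "j < n" for j
    using unj[OF that] by (metis cinner_conj_sym complex_cnj_zero)
  have ON': "ONfam (Suc n) u'"
    unfolding ONfam_def
  proof (intro allI impI)
    fix i j assume ij: "i < Suc n" "j < Suc n"
    show "cinner (u' i) (u' j) = (if i = j then 1 else 0)"
    proof (cases "i = n")
      case True
      then show ?thesis using ij unn unj by (cases "j = n") (auto simp: u'_def)
    next
      case False
      then have "i < n" using ij by simp
      then show ?thesis using ij u(1) jun False by (cases "j = n") (auto simp: u'_def ONfam_def)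
    qed
  qed
  have img_u: "u' ` {..<Suc n} = insert un (u ` {..<n})"
    by (auto simp: u'_def lessThan_Suc)
  have img_v: "v ` {..<Suc n} = insert (v n) (v ` {..<n})"
    by (auto simp: lessThan_Suc)
  have a: "un \<in> cv.span (insert (v n) (v ` {..<n}))"
  proof -
    have "v n \<in> cv.span (insert (v n) (v ` {..<n}))" by (rule cv.span_base) simp
    moreover have "s \<in> cv.span (insert (v n) (v ` {..<n}))"
      using s_span cv.span_mono[of "v ` {..<n}" "insert (v n) (v ` {..<n})"] by blast
    ultimately have "w \<in> cv.span (insert (v n) (v ` {..<n}))" unfolding w_def by (rule cv.span_diff)
    then show ?thesis unfolding un_def by (rule cv.span_scale)
  qed
  have b: "v n \<in> cv.span (insert un (u ` {..<n}))"
  proof -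
    have vw: "v n = complex_of_real nw *\<^sub>C un + s"
      using nw by (simp add: un_def w_def)
    have "complex_of_real nw *\<^sub>C un \<in> cv.span (insert un (u ` {..<n}))"
      by (intro cv.span_scale cv.span_base) simp
    moreover have "s \<in> cv.span (insert un (u ` {..<n}))"
    proof -
      have "s \<in> cv.span (u ` {..<n})" unfolding s_def by (rule span_of_sum)
      then show ?thesis using cv.span_mono[of "u ` {..<n}" "insert un (u ` {..<n})"] by blast
    qed
    ultimately show ?thesis unfolding vw by (rule cv.span_add)
  qed
  have "cv.span (u' ` {..<Suc n}) = cv.span (v ` {..<Suc n})"
    unfolding img_u img_v by (rule span_insert_eq[OF u(2) a b])
  then show ?case using ON' by blast
qed

section \<open>Orthogonal projection onto the span of an orthonormal family\<close>

definition proj :: "nat \<Rightarrow> (nat \<Rightarrow> 'a::complex_inner) \<Rightarrow> 'a \<Rightarrow> 'a" where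
  "proj n u x = (\<Sum>i<n. cinner x (u i) *\<^sub>C u i)"

lemma proj_in: "proj n u x \<in> cv.span (u ` {..<n})"
  unfolding proj_def by (rule span_of_sum)

lemma proj_orth:
  assumes "ONfam n u" "j < n"
  shows "cinner (x - proj n u x) (u j) = 0"
proof -
  have "cinner (proj n u x) (u j) = (\<Sum>i<n. cinner x (u i) * cinner (u i) (u j))"
    by (simp add: proj_def cinner_sum_left cinner_scaleC_left)
  also have "\<dots> = cinner x (u j)" by (rule ON_sum_delta[OF assms])
  finally show ?thesis by (simp add: cinner_diff_left)
qed

lemma orth_span:
  assumes "\<And>j. j < n \<Longrightarrow> cinner z (u j) = 0" "y \<in> cv.span (u ` {..<n})"
  shows "cinner z y = (0::complex)"
proof -
  have "cv.subspace {y. cinner z y = 0}"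
    unfolding cv.subspace_def by (auto simp: cinner_add_right cinner_scaleC_right)
  moreover have "u ` {..<n} \<subseteq> {y. cinner z y = 0}" using assms(1) by auto
  ultimately have "cv.span (u ` {..<n}) \<subseteq> {y. cinner z y = 0}" by (rule cv.span_minimal[rotated])
  then show ?thesis using assms(2) by blast
qed

lemma proj_orth_span:
  assumes "ONfam n u" "y \<in> cv.span (u ` {..<n})"
  shows "cinner (x - proj n u x) y = 0"
  by (rule orth_span[OF proj_orth[OF assms(1)] assms(2)])

lemma proj_id:
  assumes "ONfam n u" "y \<in> cv.span (u ` {..<n})"
  shows "proj n u y = y"
proof -
  have "y - proj n u y \<in> cv.span (u ` {..<n})" by (intro cv.span_diff assms(2) proj_in)
  then have "cinner (y - proj n u y) (y - proj n u y) = 0" by (rule proj_orth_span[OF assms(1)])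
  then have "y - proj n u y = 0" by (simp only: cinner_self_eq_zero)
  then show ?thesis by simp
qed

lemma proj_sa: "cinner (proj n u x) y = cinner x (proj n u y)"
  by (simp add: proj_def cinner_sum_left cinner_sum_right cinner_scaleC_left cinner_scaleC_right
      cinner_conj_sym[of y] mult.commute)

lemma proj_diff: "proj n u (x - y) = proj n u x - proj n u y"
  by (simp add: proj_def cinner_diff_left scaleC_diff_left sum_subtractf)

lemma proj_scaleC: "proj n u (c *\<^sub>C x) = c *\<^sub>C proj n u x"
  by (simp add: proj_def cinner_scaleC_left scaleC_sum_right)

lemma proj_add: "proj n u (x + y) = proj n u x + proj n u y"
  by (simp add: proj_def cinner_add_left scaleC_add_left sum.distrib)

lemma proj_zero: "proj n u 0 = 0"
  by (simp add: proj_def)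

lemma proj_sum: "proj n u (\<Sum>i\<in>I. f i) = (\<Sum>i\<in>I. proj n u (f i))"
  by (induction I rule: infinite_finite_induct) (simp_all add: proj_add proj_zero)


lemma cnj_cinner: "cnj (cinner x y) = cinner y (x::'a::complex_inner)"
  by (simp add: cinner_conj_sym[of y x])

lemma proj_swap: "cinner w (b - proj n u b) = cinner (w - proj n u w) b"
  by (simp add: cinner_diff_left cinner_diff_right proj_sa)

lemma funpow_apply_Suc: "(A ^^ Suc k) e = A ((A ^^ k) e)"
  by simp

lemma sa_pow:
  assumes "selfadjoint_op A"
  shows "cinner ((A ^^ k) x) y = cinner x ((A ^^ k) y)"
proof (induction k arbitrary: x y)
  case 0 then show ?case by simp
next
  case (Suc k)
  have "cinner ((A ^^ Suc k) x) y = cinner (A ((A ^^ k) x)) y" by simp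
  also have "\<dots> = cinner ((A ^^ k) x) (A y)" using assms by (simp add: selfadjoint_op_def)
  also have "\<dots> = cinner x ((A ^^ k) (A y))" by (rule Suc.IH)
  also have "(A ^^ k) (A y) = (A ^^ Suc k) y" by (simp add: funpow_swap1)
  finally show ?case .
qed

lemma has_sum_zero_cong: "(\<And>x. x \<in> B \<Longrightarrow> f x = 0) \<Longrightarrow> (f has_sum 0) B"
  by (metis has_sum_0)

locale LS =
  fixes A :: "'a::chilbert_space \<Rightarrow> 'a" and e :: 'a and N :: nat
  assumes tc: "trace_class A" and pos: "positive_op A" and sa: "selfadjoint_op A"
    and AL: "bounded_clinear A" and N1: "N \<ge> 1"
    and ind: "clin_indep_family {1..N} (\<lambda>k. (A ^^ k) e)"
begin

abbreviation "v k \<equiv> (A ^^ k) e"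
abbreviation "m k \<equiv> cinner ((A ^^ k) e) e"

lemma vv: "cinner (v k) (v l) = m (k + l)"
proof -
  have "cinner (v k) (v l) = cinner ((A ^^ l) (v k)) e" by (simp add: sa_pow[OF sa])
  also have "(A ^^ l) (v k) = (A ^^ (l + k)) e" by (simp add: funpow_add)
  also have "l + k = k + l" by simp
  finally show ?thesis .
qed

lemma A_sum_v: "A (\<Sum>k\<in>I. c k *\<^sub>C v k) = (\<Sum>k\<in>I. c k *\<^sub>C v (Suc k))"
  by (simp add: bclin_sum[OF AL] bclin_scaleC[OF AL])

lemma sum_shift: "(\<Sum>k<N. c k *\<^sub>C v (Suc k)) = (\<Sum>j\<in>{1..N}. c (j - 1) *\<^sub>C v j)"
proof -
  have "(\<Sum>j\<in>{1..N}. c (j - 1) *\<^sub>C v j) = (\<Sum>j\<in>Suc ` {..<N}. c (j - 1) *\<^sub>C v j)"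
    by (simp add: image_Suc_lessThan)
  also have "\<dots> = (\<Sum>k<N. c k *\<^sub>C v (Suc k))" by (simp add: sum.reindex)
  finally show ?thesis by simp
qed

lemma indep1: "clin_indep_family {..<N} (\<lambda>k. v (Suc k))"
  unfolding clin_indep_family_def
proof (intro allI impI ballI)
  fix c :: "nat \<Rightarrow> complex" and k assume s: "(\<Sum>k<N. c k *\<^sub>C v (Suc k)) = 0" and k: "k \<in> {..<N}"
  have "(\<Sum>j\<in>{1..N}. c (j - 1) *\<^sub>C v j) = (\<Sum>k<N. c k *\<^sub>C v (Suc k))" by (rule sum_shift[symmetric])
  also have "\<dots> = 0" by (rule s)
  finally have "(\<Sum>j\<in>{1..N}. c (j - 1) *\<^sub>C v j) = 0" .
  then have "c (Suc k - 1) = 0" by (rule indepD[OF ind]) (use k in auto)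
  then show "c k = 0" by simp
qed

lemma indep0: "clin_indep_family {..<N} v"
  unfolding clin_indep_family_def
proof (intro allI impI ballI)
  fix c :: "nat \<Rightarrow> complex" and k assume s: "(\<Sum>k<N. c k *\<^sub>C v k) = 0" and k: "k \<in> {..<N}"
  have "(\<Sum>k<N. c k *\<^sub>C v (Suc k)) = A (\<Sum>k<N. c k *\<^sub>C v k)" by (rule A_sum_v[symmetric])
  also have "\<dots> = 0" by (simp add: s bclin_zero[OF AL])
  finally have "(\<Sum>k<N. c k *\<^sub>C v (Suc k)) = 0" .
  then show "c k = 0" using indep1 k unfolding clin_indep_family_def by blast
qed

lemma inj0: "inj_on v {..<N}"
  by (rule indep_inj[OF indep0]) simp

definition "K = cv.span (v ` {..<N})"

lemma v_in_K: "k < N \<Longrightarrow> v k \<in> K"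
  unfolding K_def by (intro cv.span_base) auto

definition "uu = (SOME u. ONfam N u \<and> cv.span (u ` {..<N}) = K)"

lemma uu: "ONfam N uu" "cv.span (uu ` {..<N}) = K"
proof -
  have "\<exists>u. ONfam N u \<and> cv.span (u ` {..<N}) = K"
    unfolding K_def by (rule gram_schmidt[OF indep0])
  then have "ONfam N uu \<and> cv.span (uu ` {..<N}) = K" unfolding uu_def by (rule someI_ex)
  then show "ONfam N uu" "cv.span (uu ` {..<N}) = K" by auto
qed

abbreviation "P \<equiv> proj N uu"

lemma P_id: "y \<in> K \<Longrightarrow> P y = y"
  using proj_id[OF uu(1)] uu(2) by simp

lemma P_in: "P y \<in> K"
  using proj_in[of N uu] uu(2) by simp

lemma uu_in_K: "i < N \<Longrightarrow> uu i \<in> K"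
  using uu(2) cv.span_base[of "uu i" "uu ` {..<N}"] by auto

lemma uu_on: "i < N \<Longrightarrow> j < N \<Longrightarrow> cinner (uu i) (uu j) = (if i = j then 1 else 0)"
  using uu(1) by (simp add: ONfam_def)

definition "BB = (SOME B::'a set. is_onb B)"

lemma BB: "is_onb BB" unfolding BB_def by (rule onb_some)

definition "rr = (\<Sum>i<N. cinner (A (uu i)) (uu i))"

lemma S1: "((\<lambda>b. cinner (A (P b)) (P b)) has_sum rr) BB"
proof -
  have eq: "cinner (A (P b)) (P b) =
     (\<Sum>j<N. \<Sum>i<N. cinner (A (uu i)) (uu j) * (cinner (uu j) b * cinner b (uu i)))" for b
    by (simp add: proj_def bclin_sum[OF AL] bclin_scaleC[OF AL] cinner_sum_left cinner_sum_right
        cinner_scaleC_left cinner_scaleC_right cnj_cinner sum_distrib_left algebra_simps)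
  have hs: "((\<lambda>b. \<Sum>j<N. \<Sum>i<N. cinner (A (uu i)) (uu j) * (cinner (uu j) b * cinner b (uu i)))
      has_sum (\<Sum>j<N. \<Sum>i<N. cinner (A (uu i)) (uu j) * cinner (uu j) (uu i))) BB"
    by (intro has_sum_sum has_sum_cmult_right parseval[OF BB]) auto
  have "(\<Sum>j<N. \<Sum>i<N. cinner (A (uu i)) (uu j) * cinner (uu j) (uu i)) = rr"
  proof -
    have "(\<Sum>i<N. cinner (A (uu i)) (uu j) * cinner (uu j) (uu i)) = cinner (A (uu j)) (uu j)" if "j < N" for j
    proof -
      have "(\<Sum>i<N. cinner (A (uu i)) (uu j) * cinner (uu j) (uu i)) =
          (\<Sum>i<N. if i = j then cinner (A (uu i)) (uu j) else 0)"
        using that by (intro sum.cong refl) (auto simp: uu_on)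
      also have "\<dots> = cinner (A (uu j)) (uu j)" using that by simp
      finally show ?thesis .
    qed
    then show ?thesis unfolding rr_def by (intro sum.cong refl) simp
  qed
  with hs show ?thesis unfolding eq by simp
qed

lemma S2: "((\<lambda>b. cinner (A (P b)) (b - P b)) has_sum 0) BB"
proof -
  define w where "w i = A (uu i)" for i
  have eq: "cinner (A (P b)) (b - P b) = (\<Sum>i<N. cinner (w i - P (w i)) b * cinner b (uu i))" for b
  proof -
    have 1: "A (P b) = (\<Sum>i<N. cinner b (uu i) *\<^sub>C w i)"
      by (simp add: proj_def w_def bclin_sum[OF AL] bclin_scaleC[OF AL])
    have "cinner (A (P b)) (b - P b) = cinner (A (P b) - P (A (P b))) b" by (rule proj_swap)
    also have "\<dots> = (\<Sum>i<N. cinner (w i - P (w i)) b * cinner b (uu i))"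
      unfolding 1 by (simp add: proj_sum proj_scaleC cinner_sum_left cinner_diff_left cinner_scaleC_left
          sum_subtractf algebra_simps)
    finally show ?thesis .
  qed
  have "((\<lambda>b. \<Sum>i<N. cinner (w i - P (w i)) b * cinner b (uu i)) has_sum
        (\<Sum>i<N. cinner (w i - P (w i)) (uu i))) BB"
    by (intro has_sum_sum parseval[OF BB]) auto
  moreover have "(\<Sum>i<N. cinner (w i - P (w i)) (uu i)) = 0"
    by (intro sum.neutral ballI proj_orth[OF uu(1)]) auto
  ultimately show ?thesis unfolding eq by simp
qed

lemma S3: "((\<lambda>b. cinner (A (b - P b)) (P b)) has_sum 0) BB"
proof -
  have "cinner (A (b - P b)) (P b) = cnj (cinner (A (P b)) (b - P b))" for b
    using sa by (simp add: selfadjoint_op_def cnj_cinner)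
  moreover have "((\<lambda>b. cnj (cinner (A (P b)) (b - P b))) has_sum cnj 0) BB"
    using S2 by (simp only: has_sum_cnj_iff)
  ultimately show ?thesis by simp
qed

definition "tt = trace_op A"

lemma TT: "((\<lambda>b. cinner (A b) b) has_sum tt) BB"
  unfolding tt_def BB_def by (rule trace_class_has_sum[OF tc])

lemma S4: "((\<lambda>b. cinner (A (b - P b)) (b - P b)) has_sum (tt - rr)) BB"
proof -
  have eq: "cinner (A (b - P b)) (b - P b) = cinner (A b) b - cinner (A (P b)) (P b)
     - cinner (A (P b)) (b - P b) - cinner (A (b - P b)) (P b)" for b
    by (simp add: bclin_diff[OF AL] cinner_diff_left cinner_diff_right algebra_simps)
  have "((\<lambda>b. cinner (A b) b - cinner (A (P b)) (P b)
     - cinner (A (P b)) (b - P b) - cinner (A (b - P b)) (P b)) has_sum (tt - rr - 0 - 0)) BB"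
    by (intro has_sum_diff TT S1 S2 S3)
  then show ?thesis unfolding eq by simp
qed

lemma q_nonneg: "0 \<le> cinner (A x) x"
  using pos by (simp add: positive_op_def less_eq_complex_def)

lemma rr_le: "rr \<le> tt"
proof -
  have h: "(\<lambda>b. cinner (A (b - P b)) (b - P b)) summable_on BB"
    "infsum (\<lambda>b. cinner (A (b - P b)) (b - P b)) BB = tt - rr"
    using S4 unfolding has_sum_iff by auto
  have "0 \<le> infsum (\<lambda>b. cinner (A (b - P b)) (b - P b)) BB"
    by (rule infsum_nonneg_complex[OF h(1) q_nonneg])
  then have "0 \<le> tt - rr" unfolding h(2) .
  then show ?thesis by (simp add: less_eq_complex_def)
qed

lemma rr_eq_iff: "tt = rr \<longleftrightarrow> (\<forall>b\<in>BB. cinner (A (b - P b)) (b - P b) = 0)"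
proof
  assume "tt = rr"
  then have h: "((\<lambda>b. cinner (A (b - P b)) (b - P b)) has_sum 0) BB" using S4 by simp
  show "\<forall>b\<in>BB. cinner (A (b - P b)) (b - P b) = 0"
    using nonneg_has_sum_le_0D_complex[OF h order_refl] q_nonneg by blast
next
  assume "\<forall>b\<in>BB. cinner (A (b - P b)) (b - P b) = 0"
  then have "((\<lambda>b. cinner (A (b - P b)) (b - P b)) has_sum 0) BB" by (intro has_sum_zero_cong) auto
  then have "tt - rr = 0" using S4 has_sum_unique by blast
  then show "tt = rr" by simp
qed

end


context LS begin

definition "dd = (SOME d. P (v N) = (\<Sum>l<N. d l *\<^sub>C v l))"

lemma dd: "P (v N) = (\<Sum>l<N. dd l *\<^sub>C v l)"
proof -
  have "P (v N) \<in> cv.span (v ` {..<N})" using P_in by (simp add: K_def)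
  then have "\<exists>d. P (v N) = (\<Sum>l<N. d l *\<^sub>C v l)"
    by (rule span_repr[OF _ inj0, rotated]) simp
  then show ?thesis unfolding dd_def by (rule someI_ex)
qed

lemma P_v: "k < N \<Longrightarrow> P (v k) = v k" by (rule P_id[OF v_in_K])

lemma gram_eq: "k < N \<Longrightarrow> (\<Sum>l<N. m (k + l) * dd l) = m (k + N)"
proof -
  assume k: "k < N"
  have "cinner (P (v N)) (v k) = cinner (v N) (P (v k))" by (rule proj_sa)
  also have "\<dots> = cinner (v N) (v k)" using P_v[OF k] by simp
  also have "\<dots> = m (k + N)" by (simp add: vv add.commute)
  finally have 1: "cinner (P (v N)) (v k) = m (k + N)" .
  have "cinner (P (v N)) (v k) = (\<Sum>l<N. dd l * cinner (v l) (v k))"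
    by (simp add: dd cinner_sum_left cinner_scaleC_left)
  also have "\<dots> = (\<Sum>l<N. m (k + l) * dd l)" by (simp add: vv add.commute mult.commute)
  finally show ?thesis using 1 by simp
qed

lemma gram_inj:
  assumes h: "\<And>k. k < N \<Longrightarrow> (\<Sum>l<N. m (k + l) * x l) = 0" and l: "l < N"
  shows "x l = 0"
proof -
  define z where "z = (\<Sum>l<N. x l *\<^sub>C v l)"
  have zk: "cinner z (v k) = 0" if "k < N" for k
  proof -
    have "cinner z (v k) = (\<Sum>l<N. m (k + l) * x l)"
      by (simp add: z_def cinner_sum_left cinner_scaleC_left vv add.commute mult.commute)
    then show ?thesis using h[OF that] by simp
  qed
  have "cinner z z = cinner z (\<Sum>l<N. x l *\<^sub>C v l)" by (simp add: z_def)
  also have "\<dots> = (\<Sum>k<N. cnj (x k) * cinner z (v k))" by (simp add: cinner_sum_right cinner_scaleC_right)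
  also have "\<dots> = 0" by (intro sum.neutral ballI) (simp add: zk)
  finally have "z = 0" by (simp only: cinner_self_eq_zero)
  then have "(\<Sum>l<N. x l *\<^sub>C v l) = 0" by (simp add: z_def)
  then show "x l = 0" by (rule indepD[OF indep0]) (use l in simp)
qed

definition "CC l k = (if k < N - 1 then (if l = Suc k then 1 else 0) else dd l)"

lemma sum_delta_v: "j < N \<Longrightarrow> (\<Sum>l<N. (if l = j then 1 else 0) *\<^sub>C v l) = v j"
proof -
  assume j: "j < N"
  have "(\<Sum>l<N. (if l = j then 1 else 0) *\<^sub>C v l) = (\<Sum>l<N. if l = j then v l else 0)"
    by (intro sum.cong refl) simp
  also have "\<dots> = v j" using j by simp
  finally show ?thesis .
qed

lemma PAv: "k < N \<Longrightarrow> P (A (v k)) = (\<Sum>l<N. CC l k *\<^sub>C v l)"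
proof -
  assume k: "k < N"
  show ?thesis
  proof (cases "k < N - 1")
    case True
    then have sk: "Suc k < N" by simp
    have "P (A (v k)) = P (v (Suc k))" by simp
    also have "\<dots> = v (Suc k)" by (rule P_v[OF sk])
    also have "\<dots> = (\<Sum>l<N. (if l = Suc k then 1 else 0) *\<^sub>C v l)" by (rule sum_delta_v[OF sk, symmetric])
    finally show ?thesis using True by (simp add: CC_def)
  next
    case False
    then have "Suc k = N" using k by simp
    have "A (v k) = v (Suc k)" by simp
    also have "\<dots> = v N" using \<open>Suc k = N\<close> by simp
    finally show ?thesis using False by (simp add: dd CC_def)
  qed
qed

definition "beta = (SOME \<beta>. \<forall>i\<in>{..<N}. uu i = (\<Sum>k<N. \<beta> i k *\<^sub>C v k))"

lemma beta: "i < N \<Longrightarrow> uu i = (\<Sum>k<N. beta i k *\<^sub>C v k)"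
proof -
  have "\<forall>i\<in>{..<N}. \<exists>c. uu i = (\<Sum>k<N. c k *\<^sub>C v k)"
  proof
    fix i assume "i \<in> {..<N}"
    then have "uu i \<in> cv.span (v ` {..<N})" using uu_in_K by (simp add: K_def)
    then show "\<exists>c. uu i = (\<Sum>k<N. c k *\<^sub>C v k)" by (rule span_repr[OF _ inj0, rotated]) simp
  qed
  then have "\<exists>\<beta>. \<forall>i\<in>{..<N}. uu i = (\<Sum>k<N. \<beta> i k *\<^sub>C v k)" by (rule bchoice)
  then have "\<forall>i\<in>{..<N}. uu i = (\<Sum>k<N. beta i k *\<^sub>C v k)" unfolding beta_def by (rule someI_ex)
  then show "i < N \<Longrightarrow> uu i = (\<Sum>k<N. beta i k *\<^sub>C v k)" by simp
qed

lemma coef: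
  assumes l: "l < N" and k: "k < N"
  shows "(\<Sum>i<N. cinner (v l) (uu i) * beta i k) = (if k = l then 1 else 0)"
proof -
  define c where "c k = (\<Sum>i<N. cinner (v l) (uu i) * beta i k)" for k
  have "v l = P (v l)" by (rule P_v[OF l, symmetric])
  also have "\<dots> = (\<Sum>i<N. cinner (v l) (uu i) *\<^sub>C uu i)" by (simp add: proj_def)
  also have "\<dots> = (\<Sum>i<N. cinner (v l) (uu i) *\<^sub>C (\<Sum>k<N. beta i k *\<^sub>C v k))"
    by (intro sum.cong refl) (simp add: beta[symmetric])
  also have "\<dots> = (\<Sum>i<N. \<Sum>k<N. (cinner (v l) (uu i) * beta i k) *\<^sub>C v k)"
    by (simp add: scaleC_sum_right)
  also have "\<dots> = (\<Sum>k<N. \<Sum>i<N. (cinner (v l) (uu i) * beta i k) *\<^sub>C v k)"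
    by (rule sum.swap)
  also have "\<dots> = (\<Sum>k<N. c k *\<^sub>C v k)"
    by (simp add: c_def scaleC_sum_left)
  finally have e1: "v l = (\<Sum>k<N. c k *\<^sub>C v k)" .
  have e2: "v l = (\<Sum>k<N. (if k = l then 1 else 0) *\<^sub>C v k)" by (rule sum_delta_v[OF l, symmetric])
  have "(\<Sum>k<N. (c k - (if k = l then 1 else 0)) *\<^sub>C v k) = 0"
    using e1 e2 by (simp add: scaleC_diff_left sum_subtractf)
  then have "c k - (if k = l then 1 else 0) = 0" by (rule indepD[OF indep0]) (use k in simp)
  then show ?thesis by (simp add: c_def)
qed

lemma rr_dd: "rr = dd (N - 1)"
proof -
  have stepA: "cinner (A (uu i)) (uu i) = (\<Sum>k<N. \<Sum>l<N. CC l k * (cinner (v l) (uu i) * beta i k))"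
    if i: "i < N" for i
  proof -
    have "cinner (A (uu i)) (uu i) = cinner (A (uu i)) (P (uu i))" using P_id[OF uu_in_K[OF i]] by simp
    also have "\<dots> = cinner (P (A (uu i))) (uu i)" by (rule proj_sa[symmetric])
    also have "P (A (uu i)) = (\<Sum>k<N. beta i k *\<^sub>C P (A (v k)))"
      by (subst beta[OF i]) (simp add: bclin_sum[OF AL] bclin_scaleC[OF AL] proj_sum proj_scaleC)
    also have "\<dots> = (\<Sum>k<N. beta i k *\<^sub>C (\<Sum>l<N. CC l k *\<^sub>C v l))"
      by (intro sum.cong refl) (simp add: PAv)
    finally show ?thesis
      by (simp add: cinner_sum_left cinner_scaleC_left sum_distrib_left algebra_simps)
  qed
  have "rr = (\<Sum>i<N. \<Sum>k<N. \<Sum>l<N. CC l k * (cinner (v l) (uu i) * beta i k))"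
    unfolding rr_def by (intro sum.cong refl) (simp add: stepA)
  also have "\<dots> = (\<Sum>k<N. \<Sum>i<N. \<Sum>l<N. CC l k * (cinner (v l) (uu i) * beta i k))"
    by (rule sum.swap)
  also have "\<dots> = (\<Sum>k<N. \<Sum>l<N. \<Sum>i<N. CC l k * (cinner (v l) (uu i) * beta i k))"
    by (rule sum.cong[OF refl], rule sum.swap)
  also have "\<dots> = (\<Sum>k<N. \<Sum>l<N. CC l k * (\<Sum>i<N. cinner (v l) (uu i) * beta i k))"
    by (simp add: sum_distrib_left)
  also have "\<dots> = (\<Sum>k<N. \<Sum>l<N. CC l k * (if k = l then 1 else 0))"
    by (intro sum.cong refl) (simp add: coef)
  also have "\<dots> = (\<Sum>k<N. CC k k)"
  proof (intro sum.cong refl)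
    fix k assume "k \<in> {..<N}"
    have "(\<Sum>l<N. CC l k * (if k = l then 1 else 0)) = (\<Sum>l<N. if k = l then CC l k else 0)"
      by (intro sum.cong refl) simp
    also have "\<dots> = CC k k" using \<open>k \<in> {..<N}\<close> by simp
    finally show "(\<Sum>l<N. CC l k * (if k = l then 1 else 0)) = CC k k" .
  qed
  also have "\<dots> = (\<Sum>k<N. if k = N - 1 then dd (N - 1) else 0)"
    by (intro sum.cong refl) (auto simp: CC_def)
  also have "\<dots> = dd (N - 1)" using N1 by simp
  finally show ?thesis .
qed

end


context LS begin

lemma A_v: "A (v k) = v (Suc k)" by simp

lemma eq_forward:
  assumes h: "\<forall>b\<in>BB. cinner (A (b - P b)) (b - P b) = 0"
  shows "has_cdim (range A) N \<and> e \<in> range A"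
proof -
  have z: "A (b - P b) = 0" if "b \<in> BB" for b
    using positive_zero[OF pos sa AL] h that by blast
  have AQ: "A (x - P x) = 0" for x
  proof -
    have "cinner (A (x - P x)) y = 0" for y
    proof -
      have "cinner (A (x - P x)) y = cinner (x - P x) (A y)" using sa by (simp add: selfadjoint_op_def)
      also have "\<dots> = cinner x (A y - P (A y))" by (rule proj_swap[symmetric])
      also have "\<dots> = 0"
      proof -
        have "((\<lambda>b. cinner x b * cinner b (A y - P (A y))) has_sum cinner x (A y - P (A y))) BB"
          by (rule parseval[OF BB])
        moreover have "((\<lambda>b. cinner x b * cinner b (A y - P (A y))) has_sum 0) BB"
        proof (rule has_sum_zero_cong)
          fix b assume b: "b \<in> BB"
          have "cinner b (A y - P (A y)) = cinner (b - P b) (A y)" by (rule proj_swap)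
          also have "\<dots> = cinner (A (b - P b)) y" using sa by (simp add: selfadjoint_op_def)
          also have "\<dots> = 0" using z[OF b] by simp
          finally show "cinner x b * cinner b (A y - P (A y)) = 0" by simp
        qed
        ultimately show ?thesis using has_sum_unique by blast
      qed
      finally show ?thesis .
    qed
    then show ?thesis by (rule cinner_eq_zero_all)
  qed
  have QA: "A x - P (A x) = 0" for x
  proof -
    have "cinner (A x - P (A x)) y = 0" for y
    proof -
      have "cinner (A x - P (A x)) y = cinner (A x) (y - P y)" by (rule proj_swap[symmetric])
      also have "\<dots> = cinner x (A (y - P y))" using sa by (simp add: selfadjoint_op_def)
      finally show ?thesis by (simp add: AQ)
    qed
    then show ?thesis by (rule cinner_eq_zero_all)
  qed
  have AP: "A x = A (P x)" for x
    using AQ[of x] by (simp add: bclin_diff[OF AL])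
  have rng: "range A = {\<Sum>k<N. c k *\<^sub>C v (Suc k) | c. True}"
  proof
    show "range A \<subseteq> {\<Sum>k<N. c k *\<^sub>C v (Suc k) | c. True}"
    proof
      fix y assume "y \<in> range A"
      then obtain x where y: "y = A x" by blast
      have "P x \<in> cv.span (v ` {..<N})" using P_in by (simp add: K_def)
      then obtain c where c: "P x = (\<Sum>k<N. c k *\<^sub>C v k)"
        using span_repr[OF _ inj0] by blast
      have "y = (\<Sum>k<N. c k *\<^sub>C v (Suc k))" unfolding y AP[of x] c by (rule A_sum_v)
      then show "y \<in> {\<Sum>k<N. c k *\<^sub>C v (Suc k) | c. True}" by blast
    qed
    show "{\<Sum>k<N. c k *\<^sub>C v (Suc k) | c. True} \<subseteq> range A"
    proof
      fix y assume "y \<in> {\<Sum>k<N. c k *\<^sub>C v (Suc k) | c. True}"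
      then obtain c where "y = (\<Sum>k<N. c k *\<^sub>C v (Suc k))" by blast
      then have "y = A (\<Sum>k<N. c k *\<^sub>C v k)" by (simp only: A_sum_v)
      then show "y \<in> range A" by blast
    qed
  qed
  have cdim: "has_cdim (range A) N"
    unfolding has_cdim_def by (rule exI[of _ "\<lambda>k. v (Suc k)"]) (use indep1 rng in blast)
  have vN: "v N = (\<Sum>l<N. dd l *\<^sub>C v l)"
  proof -
    have NS: "Suc (N - 1) = N" using N1 by simp
    have "v N = v (Suc (N - 1))" using NS by simp
    also have "\<dots> = A (v (N - 1))" by simp
    finally have "v N = A (v (N - 1))" .
    then have "P (v N) = v N" using QA[of "v (N - 1)"] by simp
    then show ?thesis using dd by simp
  qed
  have split0: "(\<Sum>l<N. f l) = f 0 + (\<Sum>l\<in>{1..<N}. f l)" for f :: "nat \<Rightarrow> 'a"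
  proof -
    have "{..<N} = insert 0 {1..<N}" using N1 by auto
    then show ?thesis by simp
  qed
  have e_in: "e \<in> range A"
  proof (cases "dd 0 = 0")
    case True
    define c where "c k = (if k = N then 1 else - dd k)" for k
    have "(\<Sum>k\<in>{1..N}. c k *\<^sub>C v k) = v N + (\<Sum>k\<in>{1..<N}. c k *\<^sub>C v k)"
    proof -
      have "{1..N} = insert N {1..<N}" using N1 by auto
      then show ?thesis by (simp add: c_def)
    qed
    also have "(\<Sum>k\<in>{1..<N}. c k *\<^sub>C v k) = - (\<Sum>k\<in>{1..<N}. dd k *\<^sub>C v k)"
      by (simp add: c_def scaleC_minus_left sum_negf)
    also have "v N = (\<Sum>k\<in>{1..<N}. dd k *\<^sub>C v k)" using vN split0[of "\<lambda>l. dd l *\<^sub>C v l"] True by simp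
    finally have "(\<Sum>k\<in>{1..N}. c k *\<^sub>C v k) = 0" by simp
    then have "c N = 0" by (rule indepD[OF ind]) (use N1 in simp)
    then show ?thesis by (simp add: c_def)
  next
    case False
    define x where "x = (1 / dd 0) *\<^sub>C (v (N - 1) - (\<Sum>l\<in>{1..<N}. dd l *\<^sub>C v (l - 1)))"
    have Avl: "A (v (l - 1)) = v l" if "l \<in> {1..<N}" for l
    proof -
      have "Suc (l - 1) = l" using that by simp
      then have "v l = v (Suc (l - 1))" by simp
      then show ?thesis by simp
    qed
    have AvN: "A (v (N - 1)) = v N"
    proof -
      have "Suc (N - 1) = N" using N1 by simp
      then have "v N = v (Suc (N - 1))" by simp
      then show ?thesis by simp
    qed
    have "A x = (1 / dd 0) *\<^sub>C (A (v (N - 1)) - (\<Sum>l\<in>{1..<N}. dd l *\<^sub>C A (v (l - 1))))"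
      by (simp add: x_def bclin_scaleC[OF AL] bclin_diff[OF AL] bclin_sum[OF AL])
    also have "(\<Sum>l\<in>{1..<N}. dd l *\<^sub>C A (v (l - 1))) = (\<Sum>l\<in>{1..<N}. dd l *\<^sub>C v l)"
      by (rule sum.cong[OF refl]) (simp only: Avl)
    also have "A (v (N - 1)) = v N" by (rule AvN)
    also have "v N - (\<Sum>l\<in>{1..<N}. dd l *\<^sub>C v l) = dd 0 *\<^sub>C e"
      using vN split0[of "\<lambda>l. dd l *\<^sub>C v l"] by simp
    finally have "A x = e" using False by simp
    then show ?thesis by (rule range_eqI[OF sym])
  qed
  show ?thesis using cdim e_in by blast
qed

lemma eq_backward:
  assumes hc: "has_cdim (range A) N" and he: "e \<in> range A"
  shows "\<forall>b\<in>BB. cinner (A (b - P b)) (b - P b) = 0"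
proof -
  obtain w where wi: "clin_indep_family {..<N} w" and R: "range A = {\<Sum>k<N. c k *\<^sub>C w k | c. True}"
    using hc unfolding has_cdim_def by blast
  have Rspan: "range A = cv.span (w ` {..<N})"
  proof
    show "range A \<subseteq> cv.span (w ` {..<N})" unfolding R using span_of_sum by blast
    show "cv.span (w ` {..<N}) \<subseteq> range A"
    proof
      fix y assume "y \<in> cv.span (w ` {..<N})"
      then obtain c where "y = (\<Sum>k<N. c k *\<^sub>C w k)"
        using span_repr[OF _ indep_inj[OF wi]] by blast
      then show "y \<in> range A" unfolding R by blast
    qed
  qed
  define V1 where "V1 = v ` {1..N}"
  have V1R: "V1 \<subseteq> range A"
  proof
    fix y assume "y \<in> V1"
    then obtain k where k: "k \<in> {1..N}" "y = v k" by (auto simp: V1_def)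
    then have "Suc (k - 1) = k" by simp
    then have "v k = v (Suc (k - 1))" by simp
    then have "y = A (v (k - 1))" using k(2) by simp
    then show "y \<in> range A" by blast
  qed
  have V1i: "cv.independent V1" unfolding V1_def by (rule indep_cv[OF ind]) simp
  have inj1: "inj_on v {1..N}" by (rule indep_inj[OF ind]) simp
  have V1c: "card V1 = N" unfolding V1_def using card_image[OF inj1] by simp
  have fV1: "finite V1" by (simp add: V1_def)
  have Wc: "card (w ` {..<N}) \<le> N" using card_image_le[of "{..<N}" w] by simp
  have RV: "range A \<subseteq> cv.span V1"
  proof
    fix y assume y: "y \<in> range A"
    show "y \<in> cv.span V1"
    proof (rule ccontr)
      assume ny: "y \<notin> cv.span V1"
      have ind': "cv.independent (insert y V1)" by (rule cv.independent_insertI[OF ny V1i])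
      have sub: "insert y V1 \<subseteq> cv.span (w ` {..<N})" using y V1R Rspan by auto
      have "finite (insert y V1) \<and> card (insert y V1) \<le> card (w ` {..<N})"
        by (rule cv.independent_span_bound[OF _ ind' sub]) simp
      moreover have "y \<notin> V1" using ny cv.span_superset[of V1] by blast
      then have "card (insert y V1) = Suc N" using fV1 V1c by simp
      ultimately show False using Wc by simp
    qed
  qed
  have "e \<in> cv.span V1" using he RV by blast
  then obtain a where ea: "e = (\<Sum>k\<in>{1..N}. a k *\<^sub>C v k)"
    unfolding V1_def using span_repr[OF _ inj1] by blast
  have splitN: "(\<Sum>k\<in>{1..N}. f k) = f N + (\<Sum>k\<in>{1..<N}. f k)" for f :: "nat \<Rightarrow> 'a"
  proof -
    have "{1..N} = insert N {1..<N}" using N1 by auto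
    then show ?thesis by simp
  qed
  define S where "S = (\<Sum>k\<in>{1..<N}. a k *\<^sub>C v k)"
  have eN: "e = a N *\<^sub>C v N + S" unfolding S_def by (rule trans[OF ea splitN])
  have aN: "a N \<noteq> 0"
  proof
    assume a0: "a N = 0"
    have e1: "e = S" using eN[unfolded a0 scaleC_zero_left add_0_left] .
    have v1: "v 1 = (\<Sum>k\<in>{1..<N}. a k *\<^sub>C v (Suc k))"
    proof -
      have "v 1 = A e" by (simp only: One_nat_def funpow.simps comp_apply id_apply)
      also have "\<dots> = A S" by (rule arg_cong[OF e1])
      also have "\<dots> = (\<Sum>k\<in>{1..<N}. a k *\<^sub>C v (Suc k))" unfolding S_def by (rule A_sum_v)
      finally show ?thesis .
    qed
    define c where "c j = (if j = 1 then 1 else - a (j - 1))" for j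
    have s2: "(\<Sum>j\<in>{2..N}. c j *\<^sub>C v j) = - (\<Sum>k\<in>{1..<N}. a k *\<^sub>C v (Suc k))"
    proof -
      have img: "{2..N} = Suc ` {1..<N}"
      proof
        show "Suc ` {1..<N} \<subseteq> {2..N}" by auto
        show "{2..N} \<subseteq> Suc ` {1..<N}"
        proof
          fix x assume x: "x \<in> {2..N}"
          show "x \<in> Suc ` {1..<N}" by (rule image_eqI[of _ _ "x - 1"]) (use x in auto)
        qed
      qed
      have injS: "inj_on Suc {1..<N}" by (simp add: inj_on_def)
      have "(\<Sum>j\<in>{2..N}. c j *\<^sub>C v j) = (\<Sum>j\<in>Suc ` {1..<N}. c j *\<^sub>C v j)" by (simp only: img)
      also have "\<dots> = (\<Sum>k\<in>{1..<N}. c (Suc k) *\<^sub>C v (Suc k))"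
        by (simp only: sum.reindex[OF injS] comp_def)
      also have "\<dots> = - (\<Sum>k\<in>{1..<N}. a k *\<^sub>C v (Suc k))"
        by (simp add: c_def scaleC_minus_left sum_negf)
      finally show ?thesis .
    qed
    have "{1..N} = insert 1 {2..N}" using N1 by auto
    then have "(\<Sum>j\<in>{1..N}. c j *\<^sub>C v j) = c 1 *\<^sub>C v 1 + (\<Sum>j\<in>{2..N}. c j *\<^sub>C v j)" by simp
    also have "\<dots> = 0" using s2 v1 by (simp add: c_def)
    finally have "c 1 = 0" by (rule indepD[OF ind]) (use N1 in simp)
    then show False by (simp add: c_def)
  qed
  have vNK: "v N \<in> K"
  proof -
    have "e - S = a N *\<^sub>C v N" using arg_cong[OF eN, of "\<lambda>z. z - S"] by (simp only: add_diff_cancel)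
    then have "(1 / a N) *\<^sub>C (e - S) = (1 / a N) *\<^sub>C (a N *\<^sub>C v N)" by (rule arg_cong)
    then have vN: "v N = (1 / a N) *\<^sub>C (e - S)" using aN by (simp only: scaleC_scaleC') simp
    have "e \<in> K" using v_in_K[of 0] N1 by simp
    moreover have "S \<in> K"
      unfolding K_def S_def by (intro cv.span_sum cv.span_scale cv.span_base) auto
    ultimately show ?thesis unfolding vN K_def by (intro cv.span_scale cv.span_diff)
  qed
  have V1K: "V1 \<subseteq> K"
  proof
    fix y assume "y \<in> V1"
    then obtain k where k: "k \<in> {1..N}" "y = v k" by (auto simp: V1_def)
    show "y \<in> K"
    proof (cases "k = N")
      case True then show ?thesis using k vNK by simp
    next
      case False then show ?thesis using k v_in_K by simp
    qed
  qed
  have RK: "range A \<subseteq> K" using RV span_subset_span[of V1 "v ` {..<N}"] V1K unfolding K_def by blast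
  show ?thesis
  proof
    fix b assume "b \<in> BB"
    have "A (b - P b) \<in> K" using RK by blast
    then have "P (A (b - P b)) = A (b - P b)" by (rule P_id)
    then have "cinner (A (b - P b)) (b - P b) = cinner (A (b - P b) - P (A (b - P b))) b"
      using proj_swap by blast
    also have "\<dots> = 0" using \<open>P (A (b - P b)) = A (b - P b)\<close> by simp
    finally show "cinner (A (b - P b)) (b - P b) = 0" .
  qed
qed

lemma main_LS:
  "dd (N - 1) \<le> trace_op A \<and> (trace_op A = dd (N - 1) \<longleftrightarrow> has_cdim (range A) N \<and> e \<in> range A)"
proof -
  have 1: "dd (N - 1) \<le> trace_op A" using rr_le rr_dd by (simp add: tt_def)
  have 2: "trace_op A = dd (N - 1) \<longleftrightarrow> (\<forall>b\<in>BB. cinner (A (b - P b)) (b - P b) = 0)"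
    using rr_eq_iff rr_dd by (simp add: tt_def)
  show ?thesis using 1 2 eq_forward eq_backward by blast
qed

end


lemma det_ratio:
  fixes m d :: "nat \<Rightarrow> complex" and N :: nat
  assumes N1: "N \<ge> 1"
    and eq: "\<And>k. k < N \<Longrightarrow> (\<Sum>l<N. m (k + l) * d l) = m (k + N)"
    and inj: "\<And>x l. (\<And>k. k < N \<Longrightarrow> (\<Sum>l<N. m (k + l) * x l) = 0) \<Longrightarrow> l < N \<Longrightarrow> x l = 0"
  shows "det (mat N N (\<lambda>(k, l). if l < N - 1 then m (k + l) else m (k + N)))
           / det (mat N N (\<lambda>(k, l). m (k + l))) = d (N - 1)"
proof -
  define G where "G = mat N N (\<lambda>(k, l). m (k + l))"
  have G: "G \<in> carrier_mat N N" by (simp add: G_def)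
  define dv where "dv = vec N d"
  have dv: "dv \<in> carrier_vec N" by (simp add: dv_def)
  have mv: "(G *\<^sub>v x) $ k = (\<Sum>l<N. m (k + l) * x $ l)" if "k < N" "x \<in> carrier_vec N" for k x
    using that by (simp add: G_def scalar_prod_def lessThan_atLeast0)
  have Gd: "G *\<^sub>v dv = vec N (\<lambda>k. m (k + N))"
  proof (rule eq_vecI)
    show "dim_vec (G *\<^sub>v dv) = dim_vec (vec N (\<lambda>k. m (k + N)))" by (simp add: G_def)
    fix k assume "k < dim_vec (vec N (\<lambda>k. m (k + N)))"
    then have k: "k < N" by simp
    have "(G *\<^sub>v dv) $ k = (\<Sum>l<N. m (k + l) * dv $ l)" by (rule mv[OF k dv])
    also have "\<dots> = (\<Sum>l<N. m (k + l) * d l)" by (intro sum.cong refl) (simp add: dv_def)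
    also have "\<dots> = m (k + N)" by (rule eq[OF k])
    finally show "(G *\<^sub>v dv) $ k = vec N (\<lambda>k. m (k + N)) $ k" using k by simp
  qed
  have num: "mat N N (\<lambda>(k, l). if l < N - 1 then m (k + l) else m (k + N)) = replace_col G (G *\<^sub>v dv) (N - 1)"
  proof (rule eq_matI)
    fix i j assume ij: "i < dim_row (replace_col G (G *\<^sub>v dv) (N - 1))" "j < dim_col (replace_col G (G *\<^sub>v dv) (N - 1))"
    then have i: "i < N" and j: "j < N" by (auto simp: replace_col_def G_def)
    have dimG: "dim_row G = N" "dim_col G = N" by (simp_all add: G_def)
    have Gdi: "(G *\<^sub>v dv) $ i = m (i + N)" using Gd i by simp
    have Gij: "G $$ (i, j) = m (i + j)" using i j by (simp add: G_def)
    have "replace_col G (G *\<^sub>v dv) (N - 1) $$ (i, j) = (if j = N - 1 then (G *\<^sub>v dv) $ i else G $$ (i, j))"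
      using i j dimG unfolding replace_col_def by simp
    also have "\<dots> = (if j = N - 1 then m (i + N) else m (i + j))" by (simp only: Gdi Gij)
    also have "\<dots> = mat N N (\<lambda>(k, l). if l < N - 1 then m (k + l) else m (k + N)) $$ (i, j)"
      using i j by auto
    finally show "mat N N (\<lambda>(k, l). if l < N - 1 then m (k + l) else m (k + N)) $$ (i, j) = replace_col G (G *\<^sub>v dv) (N - 1) $$ (i, j)" by simp
  qed (auto simp: replace_col_def G_def)
  have detG: "det G \<noteq> 0"
  proof
    assume "det G = 0"
    then obtain x where x: "x \<in> carrier_vec N" "x \<noteq> 0\<^sub>v N" "G *\<^sub>v x = 0\<^sub>v N"
      using det_0_iff_vec_prod_zero[OF G] by blast
    have "x $ l = 0" if l: "l < N" for l
    proof (rule inj[of "\<lambda>l. x $ l", OF _ l])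
      fix k assume k: "k < N"
      have "(\<Sum>l<N. m (k + l) * x $ l) = (G *\<^sub>v x) $ k" by (rule mv[OF k x(1), symmetric])
      also have "\<dots> = 0" using x(3) k by simp
      finally show "(\<Sum>l<N. m (k + l) * x $ l) = 0" .
    qed
    then have "x = 0\<^sub>v N" using x(1) by (intro eq_vecI) auto
    then show False using x(2) by simp
  qed
  have "det (replace_col G (G *\<^sub>v dv) (N - 1)) = dv $ (N - 1) * det G"
    by (rule cramer_lemma_mat[OF G dv]) (use N1 in simp)
  then show ?thesis using detG N1 unfolding num[symmetric] G_def[symmetric] by (simp add: dv_def)
qed


theorem lemma7:
  fixes A :: "'a::chilbert_space \<Rightarrow> 'a" and e :: 'a and N :: nat
  assumes "trace_class A" and "positive_op A" and "selfadjoint_op A" and "bounded_clinear A"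
    and "N \<ge> 1"
    and "clin_indep_family {1..N} (\<lambda>k. (A ^^ k) e)"
  shows "det (mat N N (\<lambda>(k, l). if l < N - 1 then cinner ((A ^^ (k + l)) e) e
                                   else cinner ((A ^^ (k + N)) e) e))
           / det (mat N N (\<lambda>(k, l). cinner ((A ^^ (k + l)) e) e)) \<le> trace_op A
     \<and> (trace_op A = det (mat N N (\<lambda>(k, l). if l < N - 1 then cinner ((A ^^ (k + l)) e) e
                                   else cinner ((A ^^ (k + N)) e) e))
           / det (mat N N (\<lambda>(k, l). cinner ((A ^^ (k + l)) e) e))
         \<longleftrightarrow> has_cdim (range A) N \<and> e \<in> range A)"
proof -
  have L: "LS A e N" using assms by (simp add: LS_def)
  have ratio: "det (mat N N (\<lambda>(k, l). if l < N - 1 then cinner ((A ^^ (k + l)) e) e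
                                   else cinner ((A ^^ (k + N)) e) e))
           / det (mat N N (\<lambda>(k, l). cinner ((A ^^ (k + l)) e) e)) = LS.dd A e N (N - 1)"
    apply (rule det_ratio[of N "\<lambda>k. cinner ((A ^^ k) e) e" "LS.dd A e N"])
    subgoal by (rule assms(5))
    subgoal by (rule LS.gram_eq[OF L])
    subgoal for x l by (rule LS.gram_inj[OF L, where x = x and l = l])
    done
  show ?thesis unfolding ratio by (rule LS.main_LS[OF L])
qed

end
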